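(* Assume $X$ is a subordinator satisfying (L), with drift $\delta\ge0$ and Lévy measure $\Pi$, so that $\psi(\lambda)=-\delta\lambda-\int_0^\infty(1-e^{-\lambda r})\Pi(dr)$. Then $$-m(\lambda)=\frac{\delta}{c}\lambda+\int_0^\infty(1-e^{-\lambda r})\frac{\bar\Pi(r)}{cr}\,dr,\qquad\lambda\ge0,$$ where $\bar\Pi(y)=\Pi((y,\infty))$, and the equation $\int_0^\infty e^{-\lambda r}\nu(dr)=\exp(m(\lambda))$, $\lambda\ge0$, defines a unique probability measure $\nu$ on $(0,\infty)$. This $\nu$ is infinitely divisible and $\nu((\delta/c,\infty))=1$.
   Context: Continuous setting. $c>0$ and $X$ is a real Lévy process with no negative jumps, with Lévy exponent $\psi$ defined by $\mathbb E(e^{-\lambda X_t})=e^{t\psi(\lambda)}$, $t,\lambda\ge0$; $\psi(\lambda)=\alpha\lambda+\frac\gamma2\lambda^2+\int_0^\infty(e^{-\lambda r}-1+\lambda r\mathbf 1_{r<1})\Pi(dr)$ with $\alpha\in\mathbb R$, $\gamma\ge0$, $\Pi$ a measure on $(0,\infty)$ with $\int(1\wedge r^2)\Pi(dr)<\infty$. Condition (L): $\int_1^\infty\log(r)\,\Pi(dr)<\infty$. Under (L), $m(\lambda)=\int_0^\lambda\frac{\psi(s)}{cs}\,ds$, $\lambda\ge0$. *)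

theory Defs
  imports "HOL-Probability.Probability" "HOL-Probability.Convolution"
begin

definition sub_psi :: "real \<Rightarrow> real measure \<Rightarrow> real \<Rightarrow> real" where
  "sub_psi d LM lam = - d * lam - (\<integral> r. (1 - exp (- lam * r)) \<partial>LM)"

definition m_fun :: "real \<Rightarrow> (real \<Rightarrow> real) \<Rightarrow> real \<Rightarrow> real" where
  "m_fun c psi lam = (LBINT s:{0..lam}. psi s / (c * s))"

definition Pi_bar :: "real measure \<Rightarrow> real \<Rightarrow> real" where
  "Pi_bar LM y = measure LM {y<..}"

fun conv_power :: "real measure \<Rightarrow> nat \<Rightarrow> real measure" where
  "conv_power mu 0 = return borel 0"
| "conv_power mu (Suc n) = convolution mu (conv_power mu n)"

definition inf_divisible :: "real measure \<Rightarrow> bool" where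
  "inf_divisible nu \<longleftrightarrow> (\<forall>n::nat\<ge>1. \<exists>mu. prob_space mu \<and> sets mu = sets borel \<and> conv_power mu n = nu)"

end

theory Submission
  imports Defs
begin



lemma nonneg_AE:
  assumes "sets M = sets (borel::real measure)" "emeasure M {..<0} = 0"
  shows "AE x in M. 0 \<le> x"
proof -
  have "{..<0::real} \<in> null_sets M" using assms by (auto simp: null_sets_def)
  from AE_not_in[OF this] show ?thesis by (auto simp: not_less)
qed

lemma lap_integrable:
  assumes "prob_space M" "sets M = sets (borel::real measure)" "emeasure M {..<0} = 0" "l \<ge> 0"
  shows "integrable M (\<lambda>x. exp (- l * x))"
proof -
  interpret prob_space M by fact
  show ?thesis
  proof (rule integrable_const_bound[where B=1])
    show "AE x in M. norm (exp (- l * x)) \<le> 1"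
      using nonneg_AE[OF assms(2,3)] by eventually_elim (use assms(4) in auto)
  qed (use assms(2) in simp)
qed

lemma lap_integrable':
  assumes "prob_space M" "sets M = sets (borel::real measure)" "emeasure M {..<0} = 0" "l \<ge> 0"
  shows "integrable M (\<lambda>x. exp (- (l * x)))"
  using lap_integrable[OF assms] by simp

lemma lap_unique:
  fixes M1 M2 :: "real measure"
  assumes P1: "prob_space M1" and P2: "prob_space M2"
    and S1: "sets M1 = sets borel" and S2: "sets M2 = sets borel"
    and N1: "emeasure M1 {..<0} = 0" and N2: "emeasure M2 {..<0} = 0"
    and L: "\<And>n::nat. (\<integral>x. exp (- real n * x) \<partial>M1) = (\<integral>x. exp (- real n * x) \<partial>M2)"
  shows "M1 = M2"
proof -
  interpret D1: real_distribution M1 using P1 S1 by (simp add: real_distribution_def real_distribution_axioms_def)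
  interpret D2: real_distribution M2 using P2 S2 by (simp add: real_distribution_def real_distribution_axioms_def)
  have AE1: "AE x in M1. 0 \<le> x" by (rule nonneg_AE[OF S1 N1])
  have AE2: "AE x in M2. 0 \<le> x" by (rule nonneg_AE[OF S2 N2])
  have poly: "(\<integral>x. (\<Sum>i\<le>n. a i * (min 1 (exp (-x)))^i) \<partial>M1) = (\<integral>x. (\<Sum>i\<le>n. a i * (min 1 (exp (-x)))^i) \<partial>M2)"
    for a :: "nat \<Rightarrow> real" and n
  proof -
    have e: "(min 1 (exp (-x)))^i = exp (- real i * x)" if "0 \<le> x" for x :: real and i
      using that by (simp add: exp_of_nat_mult[symmetric] min_def)
    have "(\<integral>x. (\<Sum>i\<le>n. a i * (min 1 (exp (-x)))^i) \<partial>M1) = (\<integral>x. (\<Sum>i\<le>n. a i * exp (- real i * x)) \<partial>M1)"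
      by (rule integral_cong_AE) (use AE1 e in auto)
    also have "\<dots> = (\<Sum>i\<le>n. a i * (\<integral>x. exp (- real i * x) \<partial>M1))"
      by (subst Bochner_Integration.integral_sum) (auto intro!: lap_integrable'[OF P1 S1 N1])
    also have "\<dots> = (\<Sum>i\<le>n. a i * (\<integral>x. exp (- real i * x) \<partial>M2))" using L by simp
    also have "\<dots> = (\<integral>x. (\<Sum>i\<le>n. a i * exp (- real i * x)) \<partial>M2)"
      by (subst Bochner_Integration.integral_sum) (auto intro!: lap_integrable'[OF P2 S2 N2])
    also have "\<dots> = (\<integral>x. (\<Sum>i\<le>n. a i * (min 1 (exp (-x)))^i) \<partial>M2)"
      by (rule integral_cong_AE) (use AE2 e in auto)
    finally show ?thesis .
  qed
  have cont: "(\<integral>x. h (min 1 (exp (-x))) \<partial>M1) = (\<integral>x. h (min 1 (exp (-x))) \<partial>M2)"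
    if hc: "continuous_on {0..1} h" for h :: "real \<Rightarrow> real"
  proof -
    have rng: "min 1 (exp (-x)) \<in> {0..1}" for x :: real by auto
    have Hc: "continuous_on UNIV (\<lambda>x. h (min 1 (exp (-x))))"
      by (rule continuous_on_compose2[OF hc]) (auto intro!: continuous_intros)
    have Hm: "(\<lambda>x. h (min 1 (exp (-x)))) \<in> borel_measurable borel"
      using Hc by (rule borel_measurable_continuous_onI)
    have "\<bar>(\<integral>x. h (min 1 (exp (-x))) \<partial>M1) - (\<integral>x. h (min 1 (exp (-x))) \<partial>M2)\<bar> \<le> 2 * e" if e: "e > 0" for e :: real
    proof -
      obtain g where g: "real_polynomial_function g" "\<And>y. y \<in> {0..1} \<Longrightarrow> \<bar>h y - g y\<bar> < e"
        using Stone_Weierstrass_real_polynomial_function[OF _ hc e] by auto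
      obtain a n where gs: "g = (\<lambda>x. \<Sum>i\<le>n. a i * x^i)"
        using g(1) real_polynomial_function_iff_sum by auto
      define G where "G x = (\<Sum>i\<le>n. a i * (min 1 (exp (-x)))^i)" for x :: real
      have Gm: "G \<in> borel_measurable borel" unfolding G_def by measurable
      have Gb: "\<bar>h (min 1 (exp (-x))) - G x\<bar> < e" for x
        using g(2)[OF rng[of x]] by (simp add: G_def gs)
      have bnd: "\<bar>(\<integral>x. h (min 1 (exp (-x))) \<partial>M) - (\<integral>x. G x \<partial>M)\<bar> \<le> e"
        if "real_distribution M" for M
      proof -
        interpret real_distribution M by fact
        have ih: "integrable M (\<lambda>x. h (min 1 (exp (-x))))"
        proof -
          obtain B where "\<forall>y\<in>{0..1}. \<bar>h y\<bar> \<le> B"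
            using compact_continuous_image[OF hc compact_Icc] compact_imp_bounded
            by (force simp: bounded_iff)
          then show ?thesis
            by (intro integrable_const_bound[where B=B]) (use rng Hm in auto)
        qed
        have iG: "integrable M G"
          unfolding G_def
          by (intro Bochner_Integration.integrable_sum integrable_mult_right)
            (auto intro!: integrable_const_bound[where B=1] simp: power_le_one)
        have "\<bar>(\<integral>x. h (min 1 (exp (-x))) \<partial>M) - (\<integral>x. G x \<partial>M)\<bar> = \<bar>\<integral>x. h (min 1 (exp (-x))) - G x \<partial>M\<bar>"
          using ih iG by simp
        also have "\<dots> \<le> (\<integral>x. \<bar>h (min 1 (exp (-x))) - G x\<bar> \<partial>M)"
          by (rule integral_abs_bound)
        also have "\<dots> \<le> (\<integral>x. e \<partial>M)"
          by (intro integral_mono) (use ih iG Gb in \<open>auto intro!: less_imp_le\<close>)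
        also have "\<dots> = e" using prob_space by simp
        finally show ?thesis .
      qed
      have "(\<integral>x. G x \<partial>M1) = (\<integral>x. G x \<partial>M2)" unfolding G_def by (rule poly)
      with bnd[OF D1.real_distribution_axioms] bnd[OF D2.real_distribution_axioms] show ?thesis
        by linarith
    qed
    note E = this
    have "\<bar>(\<integral>x. h (min 1 (exp (-x))) \<partial>M1) - (\<integral>x. h (min 1 (exp (-x))) \<partial>M2)\<bar> \<le> 0"
    proof (rule field_le_epsilon)
      fix e :: real assume "0 < e"
      then have "\<bar>(\<integral>x. h (min 1 (exp (-x))) \<partial>M1) - (\<integral>x. h (min 1 (exp (-x))) \<partial>M2)\<bar> \<le> 2 * (e/2)"
        by (intro E) simp
      then show "\<bar>(\<integral>x. h (min 1 (exp (-x))) \<partial>M1) - (\<integral>x. h (min 1 (exp (-x))) \<partial>M2)\<bar> \<le> 0 + e"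
        by simp
    qed
    then show ?thesis by simp
  qed
  have step: "integral\<^sup>L M1 (cts_step a b) = integral\<^sup>L M2 (cts_step a b)" if ab: "a < b" for a b
  proof -
    define h where "h y = cts_step a b (- ln (max y (exp (-b))))" for y
    have ctsc: "continuous_on UNIV (cts_step a b)"
      using cts_step_uniformly_continuous[OF ab] uniformly_continuous_imp_continuous by blast
    have mpos: "max y (exp (-b)) \<noteq> 0" for y
      by (metis exp_gt_zero less_max_iff_disj order_less_irrefl)
    have hc: "continuous_on {0..1} h"
      unfolding h_def
      by (rule continuous_on_compose2[OF ctsc]) (auto intro!: continuous_intros simp: mpos)
    have eq: "h (min 1 (exp (-x))) = cts_step a b x" if "0 \<le> x" for x
    proof -
      have "min 1 (exp (-x)) = exp (-x)" using that by simp
      moreover have "- ln (max (exp (-x)) (exp (-b))) = min x b"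
        by (cases "x \<le> b") (auto simp: max_def min_def)
      ultimately show ?thesis unfolding h_def using ab
        by (auto simp: cts_step_def min_def)
    qed
    have m1: "cts_step a b \<in> borel_measurable borel"
      using ctsc by (rule borel_measurable_continuous_onI)
    have m2: "(\<lambda>x. h (min 1 (exp (-x)))) \<in> borel_measurable borel"
      by (rule borel_measurable_continuous_onI, rule continuous_on_compose2[OF hc])
        (auto intro!: continuous_intros)
    have B1: "f \<in> borel_measurable M1" if "f \<in> borel_measurable borel" for f :: "real \<Rightarrow> real"
      using that by (simp add: measurable_cong_sets[OF S1 refl])
    have B2: "f \<in> borel_measurable M2" if "f \<in> borel_measurable borel" for f :: "real \<Rightarrow> real"
      using that by (simp add: measurable_cong_sets[OF S2 refl])
    have "integral\<^sup>L M1 (cts_step a b) = (\<integral>x. h (min 1 (exp (-x))) \<partial>M1)"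
      by (rule integral_cong_AE) (use AE1 eq B1[OF m1] B1[OF m2] in auto)
    also have "\<dots> = (\<integral>x. h (min 1 (exp (-x))) \<partial>M2)" by (rule cont[OF hc])
    also have "\<dots> = integral\<^sup>L M2 (cts_step a b)"
      by (rule integral_cong_AE) (use AE2 eq B2[OF m1] B2[OF m2] in auto)
    finally show ?thesis .
  qed
  have le: "cdf A x \<le> cdf B x" if A: "real_distribution A" and B: "real_distribution B"
    and st: "\<And>a b. a < b \<Longrightarrow> integral\<^sup>L A (cts_step a b) = integral\<^sup>L B (cts_step a b)" for A B x
  proof -
    interpret A: real_distribution A by fact
    interpret B: real_distribution B by fact
    have "((cdf B) \<longlongrightarrow> cdf B x) (at_right x)"
      using B.cdf_is_right_cont by (simp add: continuous_within)
    moreover have "\<forall>\<^sub>F y in at_right x. cdf A x \<le> cdf B y"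
    proof -
      have hy: "cdf A x \<le> cdf B y" if xy: "x < y" for y
      proof -
        have "cdf A x \<le> integral\<^sup>L A (cts_step x y)" by (rule A.cdf_cts_step(1)[OF xy])
        also have "\<dots> = integral\<^sup>L B (cts_step x y)" by (rule st[OF xy])
        also have "\<dots> \<le> cdf B y" by (rule B.cdf_cts_step(2)[OF xy])
        finally show ?thesis .
      qed
      have "\<forall>\<^sub>F y in at_right x. x < y" by (rule eventually_at_right_less)
      then show ?thesis by (rule eventually_mono) (rule hy)
    qed
    ultimately show ?thesis
      by (rule tendsto_lowerbound) simp
  qed
  have "cdf M1 = cdf M2"
  proof
    fix x
    show "cdf M1 x = cdf M2 x"
      using le[OF D1.real_distribution_axioms D2.real_distribution_axioms step]
        le[OF D2.real_distribution_axioms D1.real_distribution_axioms step[symmetric]]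
      by (meson order_antisym)
  qed
  then show ?thesis
    by (rule cdf_unique[OF D1.real_distribution_axioms D2.real_distribution_axioms])
qed




lemma nonneg_AE':
  assumes "sets M = sets (borel::real measure)" "emeasure M {..<0} = 0"
  shows "AE x in M. 0 \<le> x"
proof -
  have "{..<0::real} \<in> null_sets M" using assms by (auto simp: null_sets_def)
  from AE_not_in[OF this] show ?thesis by (auto simp: not_less)
qed

lemma conv_lap:
  fixes M N :: "real measure"
  assumes "finite_measure M" "finite_measure N" "sets M = sets borel" "sets N = sets borel"
  shows "(\<integral>\<^sup>+x. ennreal (exp (- (l * x))) \<partial>(M \<star> N))
       = (\<integral>\<^sup>+x. ennreal (exp (- (l * x))) \<partial>M) * (\<integral>\<^sup>+x. ennreal (exp (- (l * x))) \<partial>N)"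
proof -
  have "(\<integral>\<^sup>+x. ennreal (exp (- (l * x))) \<partial>(M \<star> N))
      = (\<integral>\<^sup>+x. \<integral>\<^sup>+y. ennreal (exp (- (l * (x + y)))) \<partial>N \<partial>M)"
    by (rule nn_integral_convolution) (use assms in auto)
  also have "\<dots> = (\<integral>\<^sup>+x. ennreal (exp (- (l * x))) * (\<integral>\<^sup>+y. ennreal (exp (- (l * y))) \<partial>N) \<partial>M)"
  proof (rule nn_integral_cong)
    fix x
    have e: "ennreal (exp (- (l * (x + y)))) = ennreal (exp (- (l * x))) * ennreal (exp (- (l * y)))" for y
      by (simp add: ennreal_mult[symmetric] exp_add[symmetric] algebra_simps)
    show "(\<integral>\<^sup>+y. ennreal (exp (- (l * (x + y)))) \<partial>N) = ennreal (exp (- (l * x))) * (\<integral>\<^sup>+y. ennreal (exp (- (l * y))) \<partial>N)"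
      unfolding e by (rule nn_integral_cmult) (use assms(4) in simp)
  qed
  also have "\<dots> = (\<integral>\<^sup>+x. ennreal (exp (- (l * x))) \<partial>M) * (\<integral>\<^sup>+x. ennreal (exp (- (l * x))) \<partial>N)"
    by (rule nn_integral_multc) (use assms(3) in simp)
  finally show ?thesis .
qed

lemma conv_prob:
  fixes M N :: "real measure"
  assumes "prob_space M" "prob_space N" "sets M = sets borel" "sets N = sets borel"
  shows "prob_space (M \<star> N)"
proof -
  interpret pair_prob_space M N using assms by (simp add: pair_prob_space_def pair_sigma_finite_def prob_space_imp_sigma_finite)
  show ?thesis unfolding convolution_def
    by (rule prob_space_distr) (use assms in simp)
qed

lemma conv_neg:
  fixes M N :: "real measure"
  assumes "finite_measure M" "finite_measure N" "sets M = sets borel" "sets N = sets borel"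
    "emeasure M {..<0} = 0" "emeasure N {..<0} = 0"
  shows "emeasure (M \<star> N) {..<0} = 0"
proof -
  have "emeasure (M \<star> N) {..<0} = (\<integral>\<^sup>+x. \<integral>\<^sup>+y. indicator {..<0} (x + y) \<partial>N \<partial>M)"
    by (rule convolution_emeasure') (use assms in auto)
  also have "\<dots> = (\<integral>\<^sup>+x. 0 \<partial>M)"
  proof (rule nn_integral_cong_AE)
    show "AE x in M. (\<integral>\<^sup>+y. indicator {..<0} (x + y) \<partial>N) = 0"
      using nonneg_AE'[OF assms(3,5)]
    proof eventually_elim
      case (elim x)
      have "(\<integral>\<^sup>+y. indicator {..<0} (x + y) \<partial>N) \<le> (\<integral>\<^sup>+y. indicator {..<0} y \<partial>N)"
        by (intro nn_integral_mono) (use elim in \<open>auto split: split_indicator\<close>)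
      also have "\<dots> = 0" using assms(4,6) by simp
      finally show ?case by simp
    qed
  qed
  finally show ?thesis by simp
qed

lemma conv_power_props:
  fixes P :: "real measure"
  assumes "prob_space P" "sets P = sets borel" "emeasure P {..<0} = 0"
  shows "prob_space (conv_power P n) \<and> sets (conv_power P n) = sets borel
     \<and> emeasure (conv_power P n) {..<0} = 0
     \<and> (\<integral>\<^sup>+x. ennreal (exp (- (l * x))) \<partial>conv_power P n) = (\<integral>\<^sup>+x. ennreal (exp (- (l * x))) \<partial>P) ^ n"
proof (induction n)
  case 0
  then show ?case by (simp add: prob_space_return nn_integral_return)
next
  case (Suc n)
  then have IH: "prob_space (conv_power P n)" "sets (conv_power P n) = sets borel"
    "emeasure (conv_power P n) {..<0} = 0"
    "(\<integral>\<^sup>+x. ennreal (exp (- (l * x))) \<partial>conv_power P n) = (\<integral>\<^sup>+x. ennreal (exp (- (l * x))) \<partial>P) ^ n"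
    by auto
  have fP: "finite_measure P" using assms(1) by (simp add: prob_space_def)
  have fN: "finite_measure (conv_power P n)" using IH(1) by (simp add: prob_space_def)
  show ?case
    using conv_prob[OF assms(1) IH(1) assms(2) IH(2)] conv_neg[OF fP fN assms(2) IH(2) assms(3) IH(3)]
      conv_lap[OF fP fN assms(2) IH(2), of l] IH(4)
    by simp
qed

lemma compound_poisson:
  fixes R :: "real measure"
  assumes fR: "finite_measure R" and sR: "sets R = sets borel" and nR: "emeasure R {..<0} = 0"
  shows "\<exists>Q. prob_space Q \<and> sets Q = sets borel \<and> emeasure Q {..<0} = 0
     \<and> (\<forall>l\<ge>0. (\<integral>\<^sup>+x. ennreal (exp (- (l * x))) \<partial>Q) = ennreal (exp (- (\<integral>x. 1 - exp (- (l * x)) \<partial>R))))"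
proof -
  interpret R: finite_measure R by fact
  define t where "t = measure R (space R)"
  have t0: "t \<ge> 0" by (simp add: t_def)
  have AER: "AE x in R. 0 \<le> x" by (rule nonneg_AE'[OF sR nR])
  have intE: "integrable R (\<lambda>x. exp (- (l * x)))" if "l \<ge> 0" for l
    by (rule R.integrable_const_bound[where B=1]) (use AER that sR in \<open>auto elim!: eventually_mono\<close>)
  have lapR: "(\<integral>\<^sup>+x. ennreal (exp (- (l * x))) \<partial>R) = ennreal (\<integral>x. exp (- (l * x)) \<partial>R)" if "l \<ge> 0" for l
    by (rule nn_integral_eq_integral[OF intE[OF that]]) simp
  have Ebnd: "(\<integral>x. exp (- (l * x)) \<partial>R) \<le> t" if "l \<ge> 0" for l
  proof -
    have "(\<integral>x. exp (- (l * x)) \<partial>R) \<le> (\<integral>x. 1 \<partial>R)"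
      by (rule integral_mono_AE[OF intE[OF that]]) (use AER that in \<open>auto elim!: eventually_mono\<close>)
    then show ?thesis by (simp add: t_def)
  qed
  have int1: "(\<integral>x. 1 - exp (- (l * x)) \<partial>R) = t - (\<integral>x. exp (- (l * x)) \<partial>R)" if "l \<ge> 0" for l
    using intE[OF that] by (simp add: t_def)
  show ?thesis
  proof (cases "t = 0")
    case True
    have null: "space R \<in> null_sets R" using True
      by (simp add: t_def R.emeasure_eq_measure null_sets_def)
    have F: "AE x in R. False" by (rule AE_I'[OF null]) auto
    have z: "(\<integral>x. 1 - exp (- (l * x)) \<partial>R) = 0" for l
      by (rule integral_eq_zero_AE) (rule eventually_mono[OF F], simp)
    show ?thesis
      by (rule exI[of _ "return borel 0"]) (simp add: prob_space_return nn_integral_return z)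
  next
    case False
    with t0 have tpos: "t > 0" by simp
    define P where "P = scale_measure (ennreal (1/t)) R"
    have sP: "sets P = sets borel" using sR by (simp add: P_def)
    have eR: "emeasure R (space R) = ennreal t" by (simp add: t_def R.emeasure_eq_measure)
    have pP: "prob_space P"
    proof
      have "emeasure P (space P) = ennreal (1/t) * ennreal t" by (simp add: P_def eR[symmetric] space_scale_measure)
      also have "\<dots> = 1" using tpos by (simp flip: ennreal_mult)
      finally show "emeasure P (space P) = 1" .
    qed
    have nP: "emeasure P {..<0} = 0" by (simp add: P_def nR)
    have lapP: "(\<integral>\<^sup>+x. ennreal (exp (- (l * x))) \<partial>P) = ennreal ((\<integral>x. exp (- (l * x)) \<partial>R) / t)" if "l \<ge> 0" for l
    proof -
      have "(\<integral>\<^sup>+x. ennreal (exp (- (l * x))) \<partial>P) = ennreal (1/t) * (\<integral>\<^sup>+x. ennreal (exp (- (l * x))) \<partial>R)"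
        unfolding P_def by (rule nn_integral_scale_measure) (use sR in simp)
      also have "\<dots> = ennreal (1/t) * ennreal (\<integral>x. exp (- (l * x)) \<partial>R)" by (simp only: lapR[OF that])
      also have "\<dots> = ennreal ((\<integral>x. exp (- (l * x)) \<partial>R) / t)"
        using tpos by (simp add: ennreal_mult[symmetric])
      finally show ?thesis .
    qed
    note CP = conv_power_props[OF pP sP nP]
    define Q where "Q = measure_pmf (poisson_pmf t) \<bind> conv_power P"
    have K: "conv_power P \<in> measurable (measure_pmf (poisson_pmf t)) (subprob_algebra borel)"
      using CP by (auto simp: space_subprob_algebra prob_space_imp_subprob_space)
    have pQ: "prob_space Q" unfolding Q_def
      by (rule prob_space.prob_space_bind[OF prob_space_measure_pmf _ K]) (use CP in simp)
    have sQ: "sets Q = sets borel" unfolding Q_def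
      by (rule sets_bind) (use CP in auto)
    have nQ: "emeasure Q {..<0} = 0" unfolding Q_def
      by (subst emeasure_bind[OF _ K]) (use CP in auto)
    have lapQ: "(\<integral>\<^sup>+x. ennreal (exp (- (l * x))) \<partial>Q) = ennreal (exp (- (\<integral>x. 1 - exp (- (l * x)) \<partial>R)))"
      if l: "l \<ge> 0" for l
    proof -
      define E where "E = (\<integral>x. exp (- (l * x)) \<partial>R)"
      have E0: "E \<ge> 0" unfolding E_def by simp
      have "(\<integral>\<^sup>+x. ennreal (exp (- (l * x))) \<partial>Q)
          = (\<integral>\<^sup>+k. (\<integral>\<^sup>+x. ennreal (exp (- (l * x))) \<partial>conv_power P k) \<partial>measure_pmf (poisson_pmf t))"
        unfolding Q_def by (rule nn_integral_bind[OF _ K]) simp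
      also have "\<dots> = (\<integral>\<^sup>+k. ennreal ((E / t) ^ k) \<partial>measure_pmf (poisson_pmf t))"
      proof -
        have lP: "(\<integral>\<^sup>+x. ennreal (exp (- (l * x))) \<partial>P) = ennreal (E/t)" using lapP[OF l] by (simp add: E_def)
        have Et: "E/t \<ge> 0" using E0 t0 by simp
        show ?thesis using CP lP Et by (simp add: ennreal_power)
      qed
      also have "\<dots> = (\<Sum>k. ennreal (exp (-t) * (E ^ k / fact k)))"
        using tpos E0
        by (simp add: nn_integral_measure_pmf nn_integral_count_space_nat ennreal_mult[symmetric]
            power_divide field_simps)
      also have "\<dots> = ennreal (\<Sum>k. exp (-t) * (E ^ k / fact k))"
      proof (rule suminf_ennreal2)
        show "summable (\<lambda>k. exp (-t) * (E ^ k / fact k))"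
          using exp_converges[of E] by (intro summable_mult) (simp add: sums_iff divide_inverse mult.commute)
      qed (use E0 in simp)
      also have "(\<Sum>k. exp (-t) * (E ^ k / fact k)) = exp (-t) * exp E"
        using exp_converges[of E] by (subst suminf_mult) (auto simp: sums_iff divide_inverse mult.commute)
      also have "exp (-t) * exp E = exp (- (\<integral>x. 1 - exp (- (l * x)) \<partial>R))"
        using int1[OF l] by (simp add: E_def exp_add[symmetric])
      finally show ?thesis .
    qed
    show ?thesis using pQ sQ nQ lapQ by blast
  qed
qed




lemma ftc_exp:
  fixes s r :: real
  assumes "0 < s" "0 \<le> r"
  shows "(\<integral>\<^sup>+ y. ennreal (exp (- (s * y))) * (if 0 \<le> y \<and> y \<le> r then 1 else 0) \<partial>lborel)
         = ennreal ((1 - exp (- (s * r))) / s)"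
proof -
  have "(\<integral>\<^sup>+ y. ennreal (exp (- (s * y))) * (if 0 \<le> y \<and> y \<le> r then 1 else 0) \<partial>lborel)
      = (\<integral>\<^sup>+ y. ennreal (exp (- (s * y))) * indicator {0..r} y \<partial>lborel)"
    by (intro nn_integral_cong) (auto split: split_indicator)
  also have "\<dots> = ennreal ((\<lambda>y. - exp (- (s * y)) / s) r - (\<lambda>y. - exp (- (s * y)) / s) 0)"
  proof (rule nn_integral_FTC_Icc)
    fix y :: real
    show "DERIV (\<lambda>y. - exp (- (s * y)) / s) y :> exp (- (s * y))"
      using assms by (auto intro!: derivative_eq_intros simp: field_simps)
  qed (use assms in auto)
  also have "\<dots> = ennreal ((1 - exp (- (s * r))) / s)"
    by (simp add: diff_divide_distrib)
  finally show ?thesis .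
qed

lemma ftc_inv:
  fixes a b :: real
  assumes "0 < a" "a \<le> b"
  shows "(\<integral>\<^sup>+ y. ennreal (1 / y) * indicator {a..b} y \<partial>lborel) = ennreal (ln b - ln a)"
proof (rule nn_integral_FTC_Icc)
  fix y :: real assume "y \<in> {a..b}"
  then show "DERIV ln y :> 1 / y" using assms by (auto intro!: derivative_eq_intros)
qed (use assms in auto)

lemma bnd_exp1:
  fixes l y :: real
  assumes "0 \<le> l" "0 < y"
  shows "0 \<le> (1 - exp (- (l * y))) / y" "(1 - exp (- (l * y))) / y \<le> l" "(1 - exp (- (l * y))) / y \<le> 1 / y"
proof -
  have a: "1 - l * y \<le> exp (- (l * y))" using exp_ge_add_one_self[of "- (l * y)"] by simp
  have b: "exp (- (l * y)) \<le> 1" using assms by simp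
  show "0 \<le> (1 - exp (- (l * y))) / y" using b assms by simp
  show "(1 - exp (- (l * y))) / y \<le> l" using a assms by (simp add: divide_simps)
  show "(1 - exp (- (l * y))) / y \<le> 1 / y" using assms by (simp add: divide_simps)
qed

lemma bnd_exp2:
  fixes s r :: real
  assumes "0 < s" "0 < r"
  shows "(1 - exp (- s * r)) / s \<le> max 1 (1/s) * min 1 r"
proof -
  have "(1 - exp (- (s * r))) / s \<le> s * r / s"
    using bnd_exp1(2)[of s r] assms by (simp add: mult.commute divide_simps)
  then have r: "(1 - exp (- (s * r))) / s \<le> r" using assms by simp
  have o: "(1 - exp (- (s * r))) / s \<le> 1 / s"
    using assms by (simp add: divide_simps)
  show ?thesis
  proof (cases "r \<le> 1")
    case True
    have "r \<le> max 1 (1/s) * r" using assms by (simp add: mult_le_cancel_right1)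
    with r True show ?thesis by (simp add: min_def)
  next
    case False
    with o show ?thesis by (simp add: min_def)
  qed
qed




locale subord =
  fixes c d :: real and LM :: "real measure"
  assumes c_pos: "c > 0"
    and d_nonneg: "d \<ge> 0"
    and Pi_sets: "sets LM = sets borel"
    and Pi_support: "emeasure LM {..0} = 0"
    and Pi_subord: "(\<integral>\<^sup>+ r. ennreal (min 1 r) \<partial>LM) < \<infinity>"
    and cond_L: "(\<integral>\<^sup>+ r. ennreal (ln r) * indicator {1..} r \<partial>LM) < \<infinity>"
    and Pi_nonzero: "emeasure LM {0<..} \<noteq> 0"
begin

lemma space_LM[simp]: "space LM = UNIV"
  using sets_eq_imp_space_eq[OF Pi_sets] by simp

lemma meas_LM[measurable_cong]: "sets LM = sets borel" by (rule Pi_sets)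

lemma AE_pos: "AE r in LM. 0 < r"
proof -
  have "{..0::real} \<in> null_sets LM" using Pi_support Pi_sets by (auto simp: null_sets_def)
  from AE_not_in[OF this] show ?thesis by (auto simp: not_le)
qed

lemma tail_finite:
  assumes "0 < y"
  shows "emeasure LM {y<..} < \<infinity>"
proof -
  define e where "e = min 1 y"
  have e: "0 < e" "e \<le> 1" "e \<le> y" using assms by (auto simp: e_def)
  have "emeasure LM {y<..} = (\<integral>\<^sup>+ r. indicator {y<..} r \<partial>LM)"
    by (simp add: Pi_sets)
  also have "\<dots> \<le> (\<integral>\<^sup>+ r. ennreal (1/e) * ennreal (min 1 r) \<partial>LM)"
  proof (intro nn_integral_mono)
    fix r
    show "indicator {y<..} r \<le> ennreal (1/e) * ennreal (min 1 r)"
    proof (cases "y < r")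
      case True
      then have "1 \<le> (1/e) * min 1 r" using e by (auto simp: field_simps min_def)
      then show ?thesis using True e by (simp add: ennreal_mult[symmetric] ennreal_1[symmetric] del: ennreal_1)
    qed simp
  qed
  also have "\<dots> = ennreal (1/e) * (\<integral>\<^sup>+ r. ennreal (min 1 r) \<partial>LM)"
    by (rule nn_integral_cmult) simp
  also have "\<dots> < \<infinity>" using Pi_subord by (simp add: ennreal_mult_less_top)
  finally show ?thesis .
qed

lemma sigma_finite_LM: "sigma_finite_measure LM"
proof
  define A where "A = insert {..0::real} (range (\<lambda>n::nat. {1 / real (Suc n)<..}))"
  show "\<exists>A. countable A \<and> A \<subseteq> sets LM \<and> \<Union> A = space LM \<and> (\<forall>a\<in>A. emeasure LM a \<noteq> \<infinity>)"
  proof (intro exI[of _ A] conjI)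
    show "countable A" by (simp add: A_def)
    show "A \<subseteq> sets LM" by (auto simp: A_def Pi_sets)
    show "\<Union> A = space LM"
    proof -
      have "x \<in> \<Union> A" for x :: real
      proof (cases "x \<le> 0")
        case False
        then obtain n where "1 / real (Suc n) < x"
          using reals_Archimedean[of x] False by (auto simp: divide_inverse)
        then show ?thesis by (auto simp: A_def)
      qed (auto simp: A_def)
      then show ?thesis by auto
    qed
    show "\<forall>a\<in>A. emeasure LM a \<noteq> \<infinity>"
    proof
      fix a assume "a \<in> A"
      then consider "a = {..0}" | n where "a = {1 / real (Suc n)<..}" by (auto simp: A_def)
      then show "emeasure LM a \<noteq> \<infinity>"
      proof cases
        case 1 then show ?thesis by (simp add: Pi_support)
      next
        case (2 n)
        have "0 < 1 / real (Suc n)" by simp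
        from tail_finite[OF this] show ?thesis using 2 by simp
      qed
    qed
  qed
qed

sublocale LMs: sigma_finite_measure LM by (rule sigma_finite_LM)

lemma integrable_min1: "integrable LM (\<lambda>r. min 1 r)"
  by (rule integrableI_nonneg) (use AE_pos Pi_subord in \<open>auto elim!: eventually_mono\<close>)

lemma Pb_eq: "Pi_bar LM y = enn2real (\<integral>\<^sup>+ r. (if y < r then 1 else 0) \<partial>LM)"
proof -
  have "(\<integral>\<^sup>+ r. (if y < r then 1 else 0) \<partial>LM) = (\<integral>\<^sup>+ r. indicator {y<..} r \<partial>LM)"
    by (intro nn_integral_cong) (auto split: split_indicator)
  then show ?thesis by (simp add: Pi_bar_def measure_def Pi_sets)
qed

lemma Pb_meas[measurable]: "Pi_bar LM \<in> borel_measurable borel"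
  unfolding Pb_eq[abs_def] by measurable

lemma Pb_ennreal: "0 < y \<Longrightarrow> ennreal (Pi_bar LM y) = emeasure LM {y<..}"
  using tail_finite by (simp add: Pi_bar_def emeasure_eq_ennreal_measure less_top)

end



context subord begin

definition Hn :: "real \<Rightarrow> real \<Rightarrow> ennreal" where
  "Hn l r = (\<integral>\<^sup>+ y. ennreal ((1 - exp (- (l * y))) / y) * (if 0 \<le> y \<and> y \<le> r then 1 else 0) \<partial>lborel)"

definition G :: "real \<Rightarrow> ennreal" where
  "G l = (\<integral>\<^sup>+ r. Hn l r \<partial>LM)"

lemma Hn_bound:
  assumes l: "0 \<le> l"
  shows "Hn l r \<le> ennreal (l + 1) * (ennreal (min 1 r) + ennreal (ln r) * indicator {1..} r)"
proof (cases "r \<le> 1")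
  case True
  have "Hn l r \<le> (\<integral>\<^sup>+ y. ennreal l * indicator {0..max 0 r} y \<partial>lborel)"
    unfolding Hn_def
  proof (intro nn_integral_mono)
    fix y :: real
    show "ennreal ((1 - exp (- (l * y))) / y) * (if 0 \<le> y \<and> y \<le> r then 1 else 0) \<le> ennreal l * indicator {0..max 0 r} y"
    proof (cases "0 < y \<and> y \<le> r")
      case True
      then show ?thesis using bnd_exp1(2)[OF l, of y] by (auto simp: ennreal_leI)
    qed (auto split: split_indicator)
  qed
  also have "\<dots> = ennreal l * ennreal (max 0 r)" by (subst nn_integral_cmult_indicator) auto
  also have "\<dots> \<le> ennreal (l + 1) * ennreal (min 1 r)"
  proof -
    have "ennreal (max 0 r) \<le> ennreal (min 1 r)"
      using True by (cases "r < 0") (auto simp: min_def max_def intro: ennreal_leI)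
    moreover have "ennreal l \<le> ennreal (l + 1)" by (intro ennreal_leI) simp
    ultimately show ?thesis by (intro mult_mono) auto
  qed
  also have "\<dots> \<le> ennreal (l + 1) * (ennreal (min 1 r) + ennreal (ln r) * indicator {1..} r)"
    by (intro mult_left_mono) auto
  finally show ?thesis .
next
  case False
  have "Hn l r \<le> (\<integral>\<^sup>+ y. ennreal l * indicator {0..1} y + ennreal (1 / y) * indicator {1..r} y \<partial>lborel)"
    unfolding Hn_def
  proof (intro nn_integral_mono)
    fix y :: real
    show "ennreal ((1 - exp (- (l * y))) / y) * (if 0 \<le> y \<and> y \<le> r then 1 else 0)
      \<le> ennreal l * indicator {0..1} y + ennreal (1 / y) * indicator {1..r} y"
    proof (cases "0 < y \<and> y \<le> r")
      case True
      show ?thesis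
      proof (cases "y \<le> 1")
        case True
        then show ?thesis using bnd_exp1(2)[OF l, of y] \<open>0 < y \<and> y \<le> r\<close>
          by (auto simp: ennreal_leI intro: add_increasing2)
      next
        case False
        then show ?thesis using bnd_exp1(3)[OF l, of y] \<open>0 < y \<and> y \<le> r\<close>
          by (auto simp: ennreal_leI intro: add_increasing)
      qed
    qed (auto split: split_indicator)
  qed
  also have "\<dots> = ennreal l + ennreal (ln r)"
  proof -
    have i1: "(\<integral>\<^sup>+ y. ennreal l * indicator {0..1::real} y \<partial>lborel) = ennreal l"
      by (subst nn_integral_cmult_indicator) auto
    have i2: "(\<integral>\<^sup>+ y. ennreal (1/y) * indicator {1..r} y \<partial>lborel) = ennreal (ln r)"
      using ftc_inv[of 1 r] False by simp
    show ?thesis by (subst nn_integral_add) (auto simp: i1 i2)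
  qed
  also have "\<dots> \<le> ennreal (l + 1) * (ennreal (min 1 r) + ennreal (ln r) * indicator {1..} r)"
  proof -
    have "ennreal l + ennreal (ln r) \<le> ennreal (l + 1) * ennreal (1 + ln r)"
    proof -
      have lr: "0 \<le> ln r" using False by simp
      have "l + ln r \<le> (l + 1) * (1 + ln r)"
        using lr l by (simp add: algebra_simps)
      then show ?thesis using False l lr
        by (simp add: ennreal_mult[symmetric] ennreal_plus[symmetric] ennreal_leI del: ennreal_plus)
    qed
    also have "\<dots> = ennreal (l + 1) * (ennreal (min 1 r) + ennreal (ln r) * indicator {1..} r)"
      using False by (simp add: ennreal_plus min_def)
    finally show ?thesis .
  qed
  finally show ?thesis .
qed

lemma G_fin:
  assumes l: "0 \<le> l"
  shows "G l < \<infinity>"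
proof -
  have "G l \<le> (\<integral>\<^sup>+ r. ennreal (l + 1) * (ennreal (min 1 r) + ennreal (ln r) * indicator {1..} r) \<partial>LM)"
    unfolding G_def by (intro nn_integral_mono Hn_bound l)
  also have "\<dots> = ennreal (l + 1) * ((\<integral>\<^sup>+ r. ennreal (min 1 r) \<partial>LM) + (\<integral>\<^sup>+ r. ennreal (ln r) * indicator {1..} r \<partial>LM))"
    by (subst nn_integral_cmult) (auto simp: nn_integral_add)
  also have "\<dots> < \<infinity>"
    using Pi_subord cond_L by (simp add: ennreal_mult_less_top)
  finally show ?thesis .
qed

lemma pair_LM: "pair_sigma_finite lborel LM"
  by (simp add: pair_sigma_finite_def sigma_finite_LM lborel.sigma_finite_measure_axioms)

lemma pair_LM': "pair_sigma_finite LM lborel"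
  by (simp add: pair_sigma_finite_def sigma_finite_LM lborel.sigma_finite_measure_axioms)

lemma AE_two: "AE y in lborel. y \<noteq> (0::real) \<and> y \<noteq> r"
  using AE_lborel_singleton[of 0] AE_lborel_singleton[of r] by eventually_elim auto

lemma tail_eq:
  assumes l: "0 \<le> l"
  shows "(\<integral>\<^sup>+ y. ennreal ((1 - exp (- (l * y))) / y) * ennreal (Pi_bar LM y) * (if 0 < y then 1 else 0) \<partial>lborel) = G l"
proof -
  interpret P: pair_sigma_finite lborel LM by (rule pair_LM)
  define f where "f y r = ennreal ((1 - exp (- (l * y))) / y) * (if 0 < y then 1 else 0) * (if y < r then 1 else (0::ennreal))" for y r :: real
  have fm: "case_prod f \<in> borel_measurable (lborel \<Otimes>\<^sub>M LM)"
    unfolding f_def by measurable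
  have s1: "ennreal ((1 - exp (- (l * y))) / y) * ennreal (Pi_bar LM y) * (if 0 < y then 1 else 0)
      = (\<integral>\<^sup>+ r. f y r \<partial>LM)" for y
  proof (cases "0 < y")
    case True
    have "ennreal (Pi_bar LM y) = (\<integral>\<^sup>+ r. (if y < r then 1 else 0) \<partial>LM)"
    proof -
      have "(\<integral>\<^sup>+ r. (if y < r then 1 else 0) \<partial>LM) = (\<integral>\<^sup>+ r. indicator {y<..} r \<partial>LM)"
        by (intro nn_integral_cong) (auto split: split_indicator)
      then show ?thesis using Pb_ennreal[OF True] by (simp add: Pi_sets)
    qed
    then show ?thesis using True unfolding f_def
      by (simp add: nn_integral_cmult)
  next
    case False
    then show ?thesis by (simp add: f_def)
  qed
  have "(\<integral>\<^sup>+ y. ennreal ((1 - exp (- (l * y))) / y) * ennreal (Pi_bar LM y) * (if 0 < y then 1 else 0) \<partial>lborel)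
      = (\<integral>\<^sup>+ y. \<integral>\<^sup>+ r. f y r \<partial>LM \<partial>lborel)"
    by (simp only: s1)
  also have "\<dots> = (\<integral>\<^sup>+ r. \<integral>\<^sup>+ y. f y r \<partial>lborel \<partial>LM)"
    by (rule P.Fubini'[symmetric, OF fm])
  also have "\<dots> = (\<integral>\<^sup>+ r. Hn l r \<partial>LM)"
  proof (rule nn_integral_cong)
    fix r
    show "(\<integral>\<^sup>+ y. f y r \<partial>lborel) = Hn l r"
      unfolding Hn_def
      by (rule nn_integral_cong_AE, rule eventually_mono[OF AE_two[of r]]) (auto simp: f_def)
  qed
  finally show ?thesis by (simp add: G_def)
qed

lemma Fs_integrable:
  assumes s: "0 < s"
  shows "integrable LM (\<lambda>r. (1 - exp (- s * r)) / s)"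
proof (rule Bochner_Integration.integrable_bound)
  show "integrable LM (\<lambda>r. max 1 (1/s) * min 1 r)"
    by (rule integrable_mult_right[OF integrable_min1])
  show "AE r in LM. norm ((1 - exp (- s * r)) / s) \<le> norm (max 1 (1/s) * min 1 r)"
    using AE_pos
  proof eventually_elim
    case (elim r)
    have "0 \<le> (1 - exp (- s * r)) / s" using s elim by simp
    moreover have "(1 - exp (- s * r)) / s \<le> max 1 (1/s) * min 1 r" by (rule bnd_exp2[OF s elim])
    ultimately show ?case using elim by (simp add: abs_of_nonneg)
  qed
qed simp

lemma Fs_ennreal:
  assumes s: "0 < s"
  shows "ennreal ((\<integral>r. 1 - exp (- s * r) \<partial>LM) / s)
     = (\<integral>\<^sup>+ r. \<integral>\<^sup>+ y. ennreal (exp (- (s * y))) * (if 0 \<le> y \<and> y \<le> r then 1 else 0) \<partial>lborel \<partial>LM)"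
proof -
  have "ennreal ((\<integral>r. 1 - exp (- s * r) \<partial>LM) / s) = ennreal (\<integral>r. (1 - exp (- s * r)) / s \<partial>LM)"
    by simp
  also have "\<dots> = (\<integral>\<^sup>+ r. ennreal ((1 - exp (- s * r)) / s) \<partial>LM)"
    by (rule nn_integral_eq_integral[symmetric, OF Fs_integrable[OF s]])
      (use AE_pos s in \<open>auto elim!: eventually_mono\<close>)
  also have "\<dots> = (\<integral>\<^sup>+ r. \<integral>\<^sup>+ y. ennreal (exp (- (s * y))) * (if 0 \<le> y \<and> y \<le> r then 1 else 0) \<partial>lborel \<partial>LM)"
  proof (rule nn_integral_cong)
    fix r :: real
    show "ennreal ((1 - exp (- s * r)) / s) = (\<integral>\<^sup>+ y. ennreal (exp (- (s * y))) * (if 0 \<le> y \<and> y \<le> r then 1 else 0) \<partial>lborel)"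
    proof (cases "0 \<le> r")
      case True
      then show ?thesis using ftc_exp[OF s True] by simp
    next
      case False
      then have "s * r \<le> 0" using s by (simp add: mult_nonneg_nonpos)
      then have "(1 - exp (- s * r)) / s \<le> 0" using s by (simp add: divide_le_0_iff)
      moreover have "ennreal (exp (- (s * y))) * (if 0 \<le> y \<and> y \<le> r then 1 else 0) = 0" for y
        using False by auto
      ultimately show ?thesis by (simp add: ennreal_neg)
    qed
  qed
  finally show ?thesis .
qed

lemma F_eq:
  assumes l: "0 \<le> l"
  shows "(\<integral>\<^sup>+ s. ennreal ((\<integral>r. 1 - exp (- s * r) \<partial>LM) / s) * indicator {0..l} s \<partial>lborel) = G l"
proof -
  interpret P: pair_sigma_finite lborel LM by (rule pair_LM)
  define K where "K s r y = ennreal (exp (- (s * y))) * (if 0 \<le> y \<and> y \<le> r then 1 else 0)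
      * (if 0 \<le> s \<and> s \<le> l then 1 else (0::ennreal))" for s r y :: real
  have hm: "(\<lambda>x. \<integral>\<^sup>+ y. K (fst x) (snd x) y \<partial>lborel) \<in> borel_measurable (lborel \<Otimes>\<^sub>M LM)"
    unfolding K_def by measurable
  have "(\<integral>\<^sup>+ s. ennreal ((\<integral>r. 1 - exp (- s * r) \<partial>LM) / s) * indicator {0..l} s \<partial>lborel)
      = (\<integral>\<^sup>+ s. \<integral>\<^sup>+ r. \<integral>\<^sup>+ y. K s r y \<partial>lborel \<partial>LM \<partial>lborel)"
  proof (rule nn_integral_cong_AE, rule eventually_mono[OF AE_lborel_singleton[of 0]])
    fix s :: real assume "s \<noteq> 0"
    show "ennreal ((\<integral>r. 1 - exp (- s * r) \<partial>LM) / s) * indicator {0..l} s = (\<integral>\<^sup>+ r. \<integral>\<^sup>+ y. K s r y \<partial>lborel \<partial>LM)"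
    proof (cases "0 < s \<and> s \<le> l")
      case True
      then show ?thesis using Fs_ennreal[of s] by (simp add: K_def)
    next
      case False
      with \<open>s \<noteq> 0\<close> have "\<not> (0 \<le> s \<and> s \<le> l)" by auto
      then show ?thesis by (auto simp: K_def)
    qed
  qed
  also have "\<dots> = (\<integral>\<^sup>+ r. \<integral>\<^sup>+ s. \<integral>\<^sup>+ y. K s r y \<partial>lborel \<partial>lborel \<partial>LM)"
    by (rule P.Fubini'[symmetric]) (use hm in \<open>simp add: split_beta'\<close>)
  also have "\<dots> = (\<integral>\<^sup>+ r. \<integral>\<^sup>+ y. \<integral>\<^sup>+ s. K s r y \<partial>lborel \<partial>lborel \<partial>LM)"
  proof (rule nn_integral_cong)
    fix r :: real
    show "(\<integral>\<^sup>+ s. \<integral>\<^sup>+ y. K s r y \<partial>lborel \<partial>lborel) = (\<integral>\<^sup>+ y. \<integral>\<^sup>+ s. K s r y \<partial>lborel \<partial>lborel)"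
      by (rule lborel_pair.Fubini'[symmetric]) (unfold K_def, measurable)
  qed
  also have "\<dots> = (\<integral>\<^sup>+ r. Hn l r \<partial>LM)"
  proof (rule nn_integral_cong)
    fix r :: real
    show "(\<integral>\<^sup>+ y. \<integral>\<^sup>+ s. K s r y \<partial>lborel \<partial>lborel) = Hn l r"
      unfolding Hn_def
    proof (rule nn_integral_cong_AE, rule eventually_mono[OF AE_lborel_singleton[of 0]])
      fix y :: real assume y0: "y \<noteq> 0"
      show "(\<integral>\<^sup>+ s. K s r y \<partial>lborel) = ennreal ((1 - exp (- (l * y))) / y) * (if 0 \<le> y \<and> y \<le> r then 1 else 0)"
      proof (cases "0 \<le> y \<and> y \<le> r")
        case True
        with y0 have yp: "0 < y" by auto
        have "(\<integral>\<^sup>+ s. K s r y \<partial>lborel) = (\<integral>\<^sup>+ s. ennreal (exp (- (y * s))) * (if 0 \<le> s \<and> s \<le> l then 1 else 0) \<partial>lborel)"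
          using True by (intro nn_integral_cong) (simp add: K_def mult.commute)
        also have "\<dots> = ennreal ((1 - exp (- (y * l))) / y)" by (rule ftc_exp[OF yp l])
        finally show ?thesis using True by (simp add: mult.commute)
      next
        case False
        then show ?thesis by (auto simp: K_def)
      qed
    qed
  qed
  finally show ?thesis by (simp add: G_def)
qed

end



context subord begin

definition Phi :: "real \<Rightarrow> real" where
  "Phi l = (LBINT r:{0<..}. (1 - exp (- l * r)) * Pi_bar LM r / (c * r))"

lemma Pb_nonneg: "0 \<le> Pi_bar LM y" by (simp add: Pi_bar_def)

lemma Phi_nn:
  assumes l: "0 \<le> l"
  shows "(\<integral>\<^sup>+ r. ennreal (indicator {0<..} r * ((1 - exp (- l * r)) * Pi_bar LM r / (c * r))) \<partial>lborel)
       = ennreal (1/c) * G l"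
proof -
  have "(\<integral>\<^sup>+ r. ennreal (indicator {0<..} r * ((1 - exp (- l * r)) * Pi_bar LM r / (c * r))) \<partial>lborel)
      = (\<integral>\<^sup>+ r. ennreal (1/c) * (ennreal ((1 - exp (- (l * r))) / r) * ennreal (Pi_bar LM r) * (if 0 < r then 1 else 0)) \<partial>lborel)"
  proof (rule nn_integral_cong)
    fix r :: real
    show "ennreal (indicator {0<..} r * ((1 - exp (- l * r)) * Pi_bar LM r / (c * r)))
      = ennreal (1/c) * (ennreal ((1 - exp (- (l * r))) / r) * ennreal (Pi_bar LM r) * (if 0 < r then 1 else 0))"
    proof (cases "0 < r")
      case True
      have a: "0 \<le> (1 - exp (- (l * r))) / r" using bnd_exp1(1)[OF l True] .
      have "indicator {0<..} r * ((1 - exp (- l * r)) * Pi_bar LM r / (c * r))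
          = (1/c) * (((1 - exp (- (l * r))) / r) * Pi_bar LM r)"
        using True c_pos by (simp add: field_simps)
      moreover have "ennreal (1/c) * (ennreal ((1 - exp (- (l * r))) / r) * ennreal (Pi_bar LM r) * (if 0 < r then 1 else 0))
          = ennreal ((1/c) * (((1 - exp (- (l * r))) / r) * Pi_bar LM r))"
      proof -
        have p: "0 \<le> ((1 - exp (- (l * r))) / r) * Pi_bar LM r" by (rule mult_nonneg_nonneg[OF a Pb_nonneg])
        have "ennreal ((1/c) * (((1 - exp (- (l * r))) / r) * Pi_bar LM r))
            = ennreal (1/c) * ennreal (((1 - exp (- (l * r))) / r) * Pi_bar LM r)"
          by (rule ennreal_mult) (use c_pos p in auto)
        also have "ennreal (((1 - exp (- (l * r))) / r) * Pi_bar LM r) = ennreal ((1 - exp (- (l * r))) / r) * ennreal (Pi_bar LM r)"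
          by (rule ennreal_mult) (use a Pb_nonneg in auto)
        finally show ?thesis using True by simp
      qed
      ultimately show ?thesis by (simp only: ennreal_mult)
    qed simp
  qed
  also have "\<dots> = ennreal (1/c) * (\<integral>\<^sup>+ r. ennreal ((1 - exp (- (l * r))) / r) * ennreal (Pi_bar LM r) * (if 0 < r then 1 else 0) \<partial>lborel)"
    by (rule nn_integral_cmult) measurable
  also have "\<dots> = ennreal (1/c) * G l" by (simp only: tail_eq[OF l])
  finally show ?thesis .
qed

lemma Phi_integrable:
  assumes l: "0 \<le> l"
  shows "set_integrable lborel {0<..} (\<lambda>r. (1 - exp (- l * r)) * Pi_bar LM r / (c * r))"
  unfolding set_integrable_def
proof (rule integrableI_nonneg)
  show "AE x in lborel. 0 \<le> indicator {0<..} x *\<^sub>R ((1 - exp (- l * x)) * Pi_bar LM x / (c * x))"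
    using l c_pos Pb_nonneg by (auto split: split_indicator intro!: divide_nonneg_pos mult_nonneg_nonneg)
  have "(\<integral>\<^sup>+ r. ennreal (indicator {0<..} r *\<^sub>R ((1 - exp (- l * r)) * Pi_bar LM r / (c * r))) \<partial>lborel) = ennreal (1/c) * G l"
    using Phi_nn[OF l] by simp
  also have "\<dots> < \<infinity>" using G_fin[OF l] by (simp add: ennreal_mult_less_top)
  finally show "(\<integral>\<^sup>+ r. ennreal (indicator {0<..} r *\<^sub>R ((1 - exp (- l * r)) * Pi_bar LM r / (c * r))) \<partial>lborel) < \<infinity>" .
qed simp

lemma Phi_eq:
  assumes l: "0 \<le> l"
  shows "Phi l = enn2real (G l) / c"
proof -
  have "Phi l = enn2real (\<integral>\<^sup>+ r. ennreal (indicator {0<..} r * ((1 - exp (- l * r)) * Pi_bar LM r / (c * r))) \<partial>lborel)"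
    unfolding Phi_def set_lebesgue_integral_def
    by (subst integral_eq_nn_integral)
      (use l c_pos Pb_nonneg in \<open>auto split: split_indicator intro!: divide_nonneg_pos mult_nonneg_nonneg\<close>)
  also have "\<dots> = enn2real (ennreal (1/c) * G l)" by (simp only: Phi_nn[OF l])
  also have "\<dots> = enn2real (G l) / c" using c_pos by (simp add: enn2real_mult)
  finally show ?thesis .
qed

lemma Fs_nonneg: "0 \<le> s \<Longrightarrow> 0 \<le> (\<integral>r. 1 - exp (- s * r) \<partial>LM)"
  by (rule integral_nonneg_AE) (use AE_pos in \<open>auto elim!: eventually_mono simp: mult_nonneg_nonneg\<close>)

lemma m_eq:
  assumes l: "0 \<le> l"
  shows "m_fun c (sub_psi d LM) l = - (d / c) * l - enn2real (G l) / c"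
proof -
  define Fs where "Fs s = (\<integral>r. 1 - exp (- s * r) \<partial>LM)" for s
  have Fsm[measurable]: "Fs \<in> borel_measurable borel" unfolding Fs_def by measurable
  have nnF: "(\<integral>\<^sup>+ s. ennreal (indicator {0..l} s * (Fs s / s)) \<partial>lborel) = G l"
  proof -
    have "(\<integral>\<^sup>+ s. ennreal (indicator {0..l} s * (Fs s / s)) \<partial>lborel)
        = (\<integral>\<^sup>+ s. ennreal (Fs s / s) * indicator {0..l} s \<partial>lborel)"
      by (rule nn_integral_cong) (auto split: split_indicator)
    also have "\<dots> = G l" unfolding Fs_def by (rule F_eq[OF l])
    finally show ?thesis .
  qed
  have nonneg: "0 \<le> indicator {0..l} s * (Fs s / s)" for s
    using Fs_nonneg[of s] unfolding Fs_def by (auto split: split_indicator)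
  have int2: "integrable lborel (\<lambda>s. indicator {0..l} s * (Fs s / s))"
    by (rule integrableI_nonneg) (use nonneg nnF G_fin[OF l] in auto)
  have int1: "integrable lborel (\<lambda>s. indicator {0..l} s * (- (d / c)) :: real)"
    by (intro integrable_mult_left integrable_real_indicator) (use l in auto)
  have "m_fun c (sub_psi d LM) l = (\<integral>s. indicator {0..l} s * (sub_psi d LM s / (c * s)) \<partial>lborel)"
    by (simp add: m_fun_def set_lebesgue_integral_def)
  also have "\<dots> = (\<integral>s. indicator {0..l} s * (- (d / c)) - indicator {0..l} s * (Fs s / s) / c \<partial>lborel)"
  proof (rule integral_cong_AE)
    show "(\<lambda>s. indicator {0..l} s * (sub_psi d LM s / (c * s))) \<in> borel_measurable lborel"
      unfolding sub_psi_def by measurable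
    show "(\<lambda>s. indicator {0..l} s * (- (d / c)) - indicator {0..l} s * (Fs s / s) / c) \<in> borel_measurable lborel"
      by measurable
    show "AE s in lborel. indicator {0..l} s * (sub_psi d LM s / (c * s)) = indicator {0..l} s * (- (d / c)) - indicator {0..l} s * (Fs s / s) / c"
    proof (rule eventually_mono[OF AE_lborel_singleton[of 0]])
      fix s :: real assume s0: "s \<noteq> 0"
      have "sub_psi d LM s / (c * s) = - (d / c) - (Fs s / s) / c"
        using s0 c_pos by (simp add: sub_psi_def Fs_def field_simps)
      then show "indicator {0..l} s * (sub_psi d LM s / (c * s)) = indicator {0..l} s * (- (d / c)) - indicator {0..l} s * (Fs s / s) / c"
        by (simp split: split_indicator)
    qed
  qed
  also have "\<dots> = (\<integral>s. indicator {0..l} s * (- (d / c)) \<partial>lborel) - (\<integral>s. indicator {0..l} s * (Fs s / s) \<partial>lborel) / c"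
    by (subst Bochner_Integration.integral_diff[OF int1 integrable_divide_zero[OF int2]]) (simp only: integral_divide_zero)
  also have "(\<integral>s. indicator {0..l} s * (- (d / c)) \<partial>lborel) = - (d / c) * l"
    using l by (simp add: mult.commute)
  also have "(\<integral>s. indicator {0..l} s * (Fs s / s) \<partial>lborel) = enn2real (G l)"
    by (subst integral_eq_nn_integral) (use nonneg nnF in auto)
  finally show ?thesis .
qed

lemma part1:
  assumes l: "0 \<le> l"
  shows "- m_fun c (sub_psi d LM) l = d / c * l + (LBINT r:{0<..}. (1 - exp (- l * r)) * Pi_bar LM r / (c * r))"
  using m_eq[OF l] Phi_eq[OF l] unfolding Phi_def by simp

end



lemma lap_real:
  assumes "prob_space Q" "sets Q = sets borel" "emeasure Q {..<0} = 0" "0 \<le> l"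
    and "(\<integral>\<^sup>+x. ennreal (exp (- (l * x))) \<partial>Q) = ennreal (exp w)"
  shows "(\<integral>x. exp (- (l * x)) \<partial>Q) = exp w"
proof -
  have "ennreal (\<integral>x. exp (- (l * x)) \<partial>Q) = (\<integral>\<^sup>+x. ennreal (exp (- (l * x))) \<partial>Q)"
    by (rule nn_integral_eq_integral[symmetric, OF lap_integrable'[OF assms(1-4)]]) simp
  with assms(5) have "ennreal (\<integral>x. exp (- (l * x)) \<partial>Q) = ennreal (exp w)" by simp
  then show ?thesis by (subst (asm) ennreal_inj) auto
qed

lemma exist_limit:
  fixes Q :: "nat \<Rightarrow> real measure" and Phn :: "nat \<Rightarrow> real \<Rightarrow> real" and Ph :: "real \<Rightarrow> real"
  assumes Qp: "\<And>n. prob_space (Q n)" and Qs: "\<And>n. sets (Q n) = sets borel"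
    and Qn: "\<And>n. emeasure (Q n) {..<0} = 0"
    and QL: "\<And>n l. 0 \<le> l \<Longrightarrow> (\<integral>x. exp (- (l * x)) \<partial>Q n) = exp (- Phn n l)"
    and conv: "\<And>l. 0 \<le> l \<Longrightarrow> (\<lambda>n. Phn n l) \<longlonglongrightarrow> Ph l"
    and le: "\<And>n l. 0 \<le> l \<Longrightarrow> Phn n l \<le> Ph l"
    and small: "(\<lambda>k. Ph (1 / real (Suc k))) \<longlonglongrightarrow> 0"
  shows "\<exists>M. prob_space M \<and> sets M = sets borel \<and> emeasure M {..<0} = 0
     \<and> (\<forall>l\<ge>0. (\<integral>x. exp (- (l * x)) \<partial>M) = exp (- Ph l))"
proof -
  have RD: "real_distribution (Q n)" for n
    using Qp Qs by (simp add: real_distribution_def real_distribution_axioms_def)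
  have AEQ: "AE x in Q n. 0 \<le> x" for n by (rule nonneg_AE[OF Qs Qn])
  have tailb: "measure (Q n) {x<..} \<le> 2 * Ph l" if l: "0 < l" and x: "l * x = 2" for n l x
  proof -
    interpret real_distribution "Q n" by (rule RD)
    have i1: "integrable (Q n) (\<lambda>y. exp (- (l * y)))"
      by (rule lap_integrable'[OF Qp Qs Qn]) (use l in simp)
    have "measure (Q n) {x<..} * (1 - exp (- (l * x))) = (\<integral>y. indicator {x<..} y * (1 - exp (- (l * x))) \<partial>Q n)"
      by simp
    also have "\<dots> \<le> (\<integral>y. 1 - exp (- (l * y)) \<partial>Q n)"
    proof (rule integral_mono_AE)
      show "integrable (Q n) (\<lambda>y. indicator {x<..} y * (1 - exp (- (l * x))))"
        by (intro integrable_mult_left integrable_real_indicator) (auto simp: less_top[symmetric])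
      show "integrable (Q n) (\<lambda>y. 1 - exp (- (l * y)))" using i1 by simp
      show "AE y in Q n. indicator {x<..} y * (1 - exp (- (l * x))) \<le> 1 - exp (- (l * y))"
        using AEQ[of n]
      proof eventually_elim
        case (elim y)
        show ?case
        proof (cases "x < y")
          case True
          then show ?thesis using l by (simp add: mult_strict_left_mono)
        qed (use elim l in \<open>auto simp: mult_nonneg_nonneg\<close>)
      qed
    qed
    also have "\<dots> = 1 - exp (- Phn n l)" using i1 QL[of l n] l prob_space space_eq_univ by simp
    also have "\<dots> \<le> 1 - exp (- Ph l)" using le[of l n] l by simp
    also have "\<dots> \<le> Ph l" using exp_ge_add_one_self[of "- Ph l"] by simp
    finally have A: "measure (Q n) {x<..} * (1 - exp (-2)) \<le> Ph l" using x by simp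
    have "exp (2::real) \<ge> 2" using exp_ge_add_one_self[of 2] by simp
    then have "exp (-2::real) \<le> 1/2" by (simp add: exp_minus field_simps)
    then have B: "1/2 \<le> 1 - exp (-2::real)" by simp
    have "measure (Q n) {x<..} * (1/2) \<le> measure (Q n) {x<..} * (1 - exp (-2))"
      by (rule mult_left_mono[OF B]) simp
    with A show ?thesis by simp
  qed
  have tight: "tight Q"
    unfolding tight_def
  proof (intro conjI allI impI)
    show "real_distribution (Q n)" for n by (rule RD)
    fix e :: real assume e: "0 < e"
    have "eventually (\<lambda>k. dist (Ph (1 / real (Suc k))) 0 < e / 4) sequentially"
      using tendstoD[OF small, of "e/4"] e by simp
    then obtain N where N: "\<forall>k\<ge>N. dist (Ph (1 / real (Suc k))) 0 < e / 4"
      by (auto simp: eventually_sequentially)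
    define k where "k = N"
    have k: "Ph (1 / real (Suc k)) < e / 4"
      using N[rule_format, of k] by (auto simp: k_def dist_real_def abs_less_iff)
    define x where "x = 2 * real (Suc k)"
    have lx: "1 / real (Suc k) * x = 2" by (simp add: x_def field_simps)
    have xpos: "-1 < x" by (simp add: x_def)
    show "\<exists>a b. a < b \<and> (\<forall>n. 1 - e < measure (Q n) {a<..b})"
    proof -
      have "1 - e < measure (Q n) {-1<..x}" for n
      proof -
      interpret real_distribution "Q n" by (rule RD)
      have t: "measure (Q n) {x<..} \<le> e / 2"
        using tailb[OF _ lx, of n] k by simp
      have z: "measure (Q n) {..-1} = 0"
      proof -
        have "emeasure (Q n) {..-1} \<le> emeasure (Q n) {..<0}" by (rule emeasure_mono) auto
        then have "measure (Q n) {..-1} \<le> 0" using Qn[of n] by (simp add: emeasure_eq_measure)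
        then show ?thesis using measure_nonneg[of "Q n" "{..-1}"] by linarith
      qed
      have U: "UNIV = {..-1} \<union> ({-1<..x} \<union> {x<..})" using xpos by auto
      have "measure (Q n) ({-1<..x} \<union> {x<..}) = measure (Q n) {-1<..x} + measure (Q n) {x<..}"
        by (rule finite_measure_Union) auto
      moreover have "measure (Q n) ({..-1} \<union> ({-1<..x} \<union> {x<..})) = measure (Q n) {..-1} + measure (Q n) ({-1<..x} \<union> {x<..})"
        by (rule finite_measure_Union) (use xpos in auto)
      moreover have "measure (Q n) UNIV = 1" using prob_space space_eq_univ by simp
      ultimately have "1 = measure (Q n) {..-1} + (measure (Q n) {-1<..x} + measure (Q n) {x<..})"
        by (simp flip: U)
      then show "1 - e < measure (Q n) {-1<..x}" using t z e by linarith
      qed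
      then show ?thesis using xpos by blast
    qed
  qed
  obtain r M where r: "strict_mono r" and M: "real_distribution M" and wc: "weak_conv_m (Q \<circ> id \<circ> r) M"
    using tight_imp_convergent_subsubsequence[OF tight strict_mono_id] by blast
  interpret MD: real_distribution M by (rule M)
  have RD': "real_distribution ((Q \<circ> id \<circ> r) n)" for n using RD by simp
  have lim: "(\<lambda>n. \<integral>x. f x \<partial>Q (r n)) \<longlonglongrightarrow> (\<integral>x. f x \<partial>M)"
    if "\<And>x. isCont f x" "\<And>x. norm (f x) \<le> B" for f :: "real \<Rightarrow> real" and B
    using weak_conv_imp_integral_bdd_continuous_conv[OF RD' M wc that] by simp
  have meas: "f \<in> borel_measurable (Q n)" if "f \<in> borel_measurable borel" for f :: "real \<Rightarrow> real" and n
    using that by (simp add: measurable_cong_sets[OF Qs refl])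
  have measM: "f \<in> borel_measurable M" if "f \<in> borel_measurable borel" for f :: "real \<Rightarrow> real"
    using that by (simp add: measurable_cong_sets[OF MD.events_eq_borel refl])
  define g where "g x = min 1 (max 0 (- x))" for x :: real
  have gc: "isCont g x" for x unfolding g_def by (intro continuous_intros)
  have gm: "g \<in> borel_measurable borel" unfolding g_def by measurable
  have g0: "(\<integral>x. g x \<partial>Q n) = 0" for n
    by (rule integral_eq_zero_AE) (rule eventually_mono[OF AEQ], simp add: g_def)
  have "(\<lambda>n. \<integral>x. g x \<partial>Q (r n)) \<longlonglongrightarrow> (\<integral>x. g x \<partial>M)"
    by (rule lim[OF gc, of 1]) (simp add: g_def)
  then have "(\<integral>x. g x \<partial>M) = 0" using g0 by (simp add: LIMSEQ_const_iff)
  moreover have "integrable M g"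
    by (rule MD.integrable_const_bound[where B=1]) (auto simp: g_def intro: measM gm)
  ultimately have "AE x in M. g x = 0"
    by (subst (asm) integral_nonneg_eq_0_iff_AE) (auto simp: g_def)
  then have AEM: "AE x in M. 0 \<le> x"
    by (rule eventually_mono) (auto simp: g_def min_def max_def split: if_splits)
  have Mn: "emeasure M {..<0} = 0"
  proof -
    have "(AE x in M. 0 \<le> x) \<longleftrightarrow> emeasure M {..<0} = 0"
      by (rule AE_iff_measurable) (auto simp: not_le)
    with AEM show ?thesis by simp
  qed
  have MLap: "(\<integral>x. exp (- (l * x)) \<partial>M) = exp (- Ph l)" if l: "0 \<le> l" for l
  proof -
    define f where "f x = exp (- (l * max x 0))" for x
    have fc: "isCont f x" for x unfolding f_def by (intro continuous_intros)
    have fm: "f \<in> borel_measurable borel" unfolding f_def by measurable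
    have fb: "norm (f x) \<le> 1" for x using l by (simp add: f_def)
    have fQ: "(\<integral>x. f x \<partial>Q n) = exp (- Phn n l)" for n
    proof -
      have "(\<integral>x. f x \<partial>Q n) = (\<integral>x. exp (- (l * x)) \<partial>Q n)"
        by (rule integral_cong_AE) (auto intro!: meas fm eventually_mono[OF AEQ] simp: f_def)
      then show ?thesis using QL[OF l] by simp
    qed
    have "(\<lambda>n. exp (- Phn (r n) l)) \<longlonglongrightarrow> (\<integral>x. f x \<partial>M)"
      using lim[OF fc fb] by (simp add: fQ)
    moreover have "(\<lambda>n. exp (- Phn (r n) l)) \<longlonglongrightarrow> exp (- Ph l)"
    proof -
      have "(\<lambda>n. Phn (r n) l) \<longlonglongrightarrow> Ph l"
        using LIMSEQ_subseq_LIMSEQ[OF conv[OF l] r] by (simp add: o_def)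
      then show ?thesis by (intro tendsto_intros)
    qed
    ultimately have "(\<integral>x. f x \<partial>M) = exp (- Ph l)" by (rule LIMSEQ_unique)
    moreover have "(\<integral>x. f x \<partial>M) = (\<integral>x. exp (- (l * x)) \<partial>M)"
      by (rule integral_cong_AE) (auto intro!: measM fm eventually_mono[OF AEM] simp: f_def)
    ultimately show ?thesis by simp
  qed
  show ?thesis
    using MD.prob_space_axioms MD.events_eq_borel Mn MLap by blast
qed




lemma shift_exist:
  fixes M :: "real measure" and a :: real
  assumes Mp: "prob_space M" and Ms: "sets M = sets borel" and Mn: "emeasure M {..<0} = 0"
    and MLp: "\<And>l. 0 \<le> l \<Longrightarrow> (\<integral>x. exp (- (l * x)) \<partial>M) = exp (- Ph l)"
    and a: "0 \<le> a"
  shows "\<exists>N. prob_space N \<and> sets N = sets borel \<and> emeasure N {..<0} = 0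
     \<and> (\<forall>l\<ge>0. (\<integral>x. exp (- (l * x)) \<partial>N) = exp (- (a * l) - Ph l))"
proof -
  interpret prob_space M by fact
  have sm: "(\<lambda>x. x + a) \<in> measurable M borel"
    by (simp add: measurable_cong_sets[OF Ms refl])
  define N where "N = distr M borel (\<lambda>x. x + a)"
  have Np: "prob_space N" unfolding N_def by (rule prob_space_distr[OF sm])
  have Nsets: "sets N = sets borel" by (simp add: N_def)
  have Nn: "emeasure N {..<0} = 0"
  proof -
    have "emeasure N {..<0} = emeasure M ((\<lambda>x. x + a) -` {..<0} \<inter> space M)"
      unfolding N_def by (rule emeasure_distr[OF sm]) simp
    also have "\<dots> \<le> emeasure M {..<0}"
      by (rule emeasure_mono) (use a Ms in auto)
    finally show ?thesis using Mn by simp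
  qed
  have NL: "(\<integral>x. exp (- (l * x)) \<partial>N) = exp (- (a * l) - Ph l)" if l: "0 \<le> l" for l
  proof -
    have "(\<integral>x. exp (- (l * x)) \<partial>N) = (\<integral>x. exp (- (l * (x + a))) \<partial>M)"
      unfolding N_def by (rule integral_distr[OF sm]) simp
    also have "\<dots> = (\<integral>x. exp (- (a * l)) * exp (- (l * x)) \<partial>M)"
      by (simp add: exp_add[symmetric] algebra_simps)
    also have "\<dots> = exp (- (a * l)) * exp (- Ph l)" using MLp[OF l] by simp
    also have "\<dots> = exp (- (a * l) - Ph l)" by (simp add: exp_diff exp_minus field_simps)
    finally show ?thesis .
  qed
  show ?thesis using Np Nsets Nn NL by blast
qed

lemma atom_free:
  fixes N :: "real measure" and a :: real
  assumes Np: "prob_space N" and Ns: "sets N = sets borel" and Nn: "emeasure N {..<0} = 0"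
    and NL: "\<And>l. 0 \<le> l \<Longrightarrow> (\<integral>x. exp (- (l * x)) \<partial>N) = exp (- (a * l) - Ph l)"
    and unb: "\<And>K. \<exists>l\<ge>0. K \<le> Ph l"
  shows "emeasure N {..a} = 0"
proof -
  interpret prob_space N by fact
  have AEN: "AE x in N. 0 \<le> x" by (rule nonneg_AE[OF Ns Nn])
  have bnd: "measure N {..a} \<le> exp (- Ph l)" if l: "0 \<le> l" for l
  proof -
    have i: "integrable N (\<lambda>x. exp (- (l * x)))" by (rule lap_integrable'[OF Np Ns Nn l])
    have "measure N {..a} = (\<integral>x. indicator {..a} x \<partial>N)" by (simp add: Ns)
    also have "\<dots> \<le> (\<integral>x. exp (a * l) * exp (- (l * x)) \<partial>N)"
    proof (rule integral_mono)
      show "integrable N (indicator {..a} :: real \<Rightarrow> real)"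
        by (rule integrable_real_indicator) (auto simp: Ns less_top[symmetric])
      show "integrable N (\<lambda>x. exp (a * l) * exp (- (l * x)))" using i by simp
      fix x
      show "indicator {..a} x \<le> exp (a * l) * exp (- (l * x))"
      proof (cases "x \<le> a")
        case True
        then have "0 \<le> a * l - l * x" using l mult_left_mono[OF True l] by (simp add: algebra_simps)
        then have "1 \<le> exp (a * l - l * x)" by simp
        then show ?thesis using True by (simp add: exp_diff exp_minus field_simps)
      qed simp
    qed
    also have "\<dots> = exp (a * l) * exp (- (a * l) - Ph l)" using NL[OF l] by simp
    also have "\<dots> = exp (- Ph l)" by (simp add: exp_add[symmetric])
    finally show ?thesis .
  qed
  have "measure N {..a} = 0"
  proof (rule ccontr)
    assume "measure N {..a} \<noteq> 0"
    then have p: "0 < measure N {..a}" using measure_nonneg[of N "{..a}"] by linarith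
    obtain l where l: "0 \<le> l" "- ln (measure N {..a} / 2) \<le> Ph l" using unb by blast
    have "exp (- Ph l) \<le> exp (ln (measure N {..a} / 2))" using l(2) by simp
    also have "\<dots> = measure N {..a} / 2" using p by simp
    finally show False using bnd[OF l(1)] p by linarith
  qed
  then show ?thesis by (simp add: emeasure_eq_measure)
qed




context subord begin

definition fl :: "real \<Rightarrow> real \<Rightarrow> real" where
  "fl l r = indicator {0<..} r * ((1 - exp (- l * r)) * Pi_bar LM r / (c * r))"

lemma fl_meas[measurable]: "fl l \<in> borel_measurable borel"
  unfolding fl_def by measurable

lemma Phi_fl: "Phi l = (\<integral>r. fl l r \<partial>lborel)"
  by (simp add: Phi_def fl_def set_lebesgue_integral_def)

lemma fl_int: "0 \<le> l \<Longrightarrow> integrable lborel (fl l)"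
  using Phi_integrable unfolding set_integrable_def fl_def by simp

lemma fl_nonneg: "0 \<le> l \<Longrightarrow> 0 \<le> fl l r"
  using c_pos Pb_nonneg unfolding fl_def
  by (auto split: split_indicator intro!: mult_nonneg_nonneg divide_nonneg_pos simp: mult_nonneg_nonneg)

lemma Phi_small: "(\<lambda>k. Phi (1 / real (Suc k))) \<longlonglongrightarrow> 0"
proof -
  have "(\<lambda>k. \<integral>r. fl (1 / real (Suc k)) r \<partial>lborel) \<longlonglongrightarrow> (\<integral>r. 0 \<partial>(lborel :: real measure))"
  proof (rule integral_dominated_convergence[where w="fl 1"])
    show "integrable lborel (fl 1)" by (rule fl_int) simp
    show "AE x in lborel. (\<lambda>k. fl (1 / real (Suc k)) x) \<longlonglongrightarrow> 0"
    proof (rule AE_I2)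
      fix x :: real
      have "(\<lambda>k. 1 / real (Suc k)) \<longlonglongrightarrow> 0"
        using LIMSEQ_inverse_real_of_nat by (simp add: divide_inverse)
      then have "(\<lambda>k. indicator {0<..} x * ((1 - exp (- (1 / real (Suc k)) * x)) * (Pi_bar LM x / (c * x))))
          \<longlonglongrightarrow> indicator {0<..} x * ((1 - exp (- 0 * x)) * (Pi_bar LM x / (c * x)))"
        by (intro tendsto_intros)
      then show "(\<lambda>k. fl (1 / real (Suc k)) x) \<longlonglongrightarrow> 0" by (simp add: fl_def)
    qed
    show "AE x in lborel. norm (fl (1 / real (Suc k)) x) \<le> fl 1 x" for k
    proof (rule AE_I2)
      fix x :: real
      show "norm (fl (1 / real (Suc k)) x) \<le> fl 1 x"
      proof (cases "0 < x")
        case True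
        have "exp (- x) \<le> exp (- (1 / real (Suc k)) * x)"
          using True by (simp add: field_simps)
        then have "(1 - exp (- (1 / real (Suc k)) * x)) * (Pi_bar LM x / (c * x)) \<le> (1 - exp (- 1 * x)) * (Pi_bar LM x / (c * x))"
          using True c_pos Pb_nonneg by (intro mult_right_mono) auto
        moreover have "0 \<le> fl (1 / real (Suc k)) x" by (rule fl_nonneg) simp
        ultimately show ?thesis using True by (simp add: fl_def)
      qed (simp add: fl_def)
    qed
  qed simp_all
  then show ?thesis by (simp add: Phi_fl)
qed

lemma exists_pos_tail: "\<exists>e>0. 0 < emeasure LM {e<..}"
proof (rule ccontr)
  assume "\<not> ?thesis"
  then have z: "emeasure LM {1 / real (Suc n)<..} = 0" for n
    by (metis not_gr_zero of_nat_0_less_iff zero_less_Suc zero_less_divide_1_iff)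
  have "(\<Union>n. {1 / real (Suc n)<..}) \<in> null_sets LM"
    using z by (intro null_sets_UN) (auto simp: null_sets_def Pi_sets)
  moreover have "(\<Union>n. {1 / real (Suc n)<..}) = {0::real<..}"
  proof
    show "{0::real<..} \<subseteq> (\<Union>n. {1 / real (Suc n)<..})"
    proof
      fix x :: real assume "x \<in> {0<..}"
      then obtain n where "inverse (real (Suc n)) < x" using reals_Archimedean by auto
      then show "x \<in> (\<Union>n. {1 / real (Suc n)<..})" by (auto simp: divide_inverse)
    qed
    show "(\<Union>n. {1 / real (Suc n)<..}) \<subseteq> {0::real<..}"
    proof
      fix x :: real assume "x \<in> (\<Union>n. {1 / real (Suc n)<..})"
      then obtain n where "1 / real (Suc n) < x" by auto
      moreover have "0 < 1 / real (Suc n)" by simp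
      ultimately show "x \<in> {0<..}" by (metis greaterThan_iff less_trans)
    qed
  qed
  ultimately show False using Pi_nonzero by (simp add: null_sets_def)
qed

lemma Phi_unbounded: "\<exists>l\<ge>0. K \<le> Phi l"
proof -
  obtain e where e: "0 < e" "0 < emeasure LM {e<..}" using exists_pos_tail by blast
  define p where "p = Pi_bar LM e"
  have p: "0 < p" using e Pb_ennreal[OF e(1)] by (metis ennreal_less_zero_iff p_def)
  have pb: "p \<le> Pi_bar LM y" if "0 < y" "y \<le> e" for y
  proof -
    have "emeasure LM {e<..} \<le> emeasure LM {y<..}" by (rule emeasure_mono) (use that Pi_sets in auto)
    then have "ennreal p \<le> ennreal (Pi_bar LM y)" using Pb_ennreal[OF e(1)] Pb_ennreal[OF that(1)] by (simp add: p_def)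
    then show ?thesis using Pb_nonneg by (simp add: ennreal_le_iff)
  qed
  define C where "C = (1 - exp (-1)) * p / c"
  have C: "0 < C" using p c_pos by (simp add: C_def)
  define l where "l = exp (\<bar>K\<bar> / C) / e"
  have l: "0 < l" using e by (simp add: l_def)
  have le: "1 / l \<le> e" using e C by (simp add: l_def field_simps)
  have il: "0 < 1 / l" using l by simp
  have ypos: "0 < y" if "1 / l \<le> y" for y using il that by linarith
  have "C * (ln e - ln (1 / l)) = (\<integral>y. C * (1 / y * indicator {1/l..e} y) \<partial>lborel)"
  proof -
    have "(\<integral>y. 1 / y * indicator {1/l..e} y \<partial>lborel) = ln e - ln (1 / l)"
      by (rule integral_FTC_Icc_nonneg) (use il le ypos in \<open>force intro!: derivative_eq_intros\<close>)+
    moreover have "(\<integral>y. C * (1 / y * indicator {1/l..e} y) \<partial>lborel) = C * (\<integral>y. 1 / y * indicator {1/l..e} y \<partial>lborel)"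
      by (rule integral_mult_right_zero)
    ultimately show ?thesis by simp
  qed
  also have "\<dots> \<le> (\<integral>y. fl l y \<partial>lborel)"
  proof (rule integral_mono)
    have "integrable lborel (\<lambda>y. 1 / y * indicator {1/l..e} y)"
      by (rule integrable_FTC_Icc_nonneg[where F=ln]) (use il le ypos in \<open>force intro!: derivative_eq_intros\<close>)+
    then show "integrable lborel (\<lambda>y. C * (1 / y * indicator {1/l..e} y))" by (rule integrable_mult_right)
    show "integrable lborel (fl l)" using l by (intro fl_int) simp
    fix y :: real
    show "C * (1 / y * indicator {1/l..e} y) \<le> fl l y"
    proof (cases "y \<in> {1/l..e}")
      case True
      then have y: "0 < y" "1/l \<le> y" "y \<le> e" using ypos by auto
      have ly: "1 \<le> l * y" using y(2) l by (simp add: field_simps)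
      have "exp (- (l * y)) \<le> exp (-1)" using ly by simp
      then have a: "1 - exp (-1) \<le> 1 - exp (- l * y)" by simp
      have b: "p \<le> Pi_bar LM y" by (rule pb[OF y(1) y(3)])
      have "(1 - exp (-1)) * p \<le> (1 - exp (- l * y)) * Pi_bar LM y"
        using a b p by (intro mult_mono) auto
      then have "(1 - exp (-1)) * p / (c * y) \<le> (1 - exp (- l * y)) * Pi_bar LM y / (c * y)"
        using y c_pos by (intro divide_right_mono) auto
      then show ?thesis using True y by (simp add: fl_def C_def)
    next
      case False
      then show ?thesis using fl_nonneg[of l y] l by simp
    qed
  qed
  also have "\<dots> = Phi l" by (simp add: Phi_fl)
  finally have "C * (ln e - ln (1 / l)) \<le> Phi l" .
  moreover have "ln e - ln (1 / l) = \<bar>K\<bar> / C"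
    using e l by (simp add: l_def ln_div)
  ultimately have "\<bar>K\<bar> \<le> Phi l" using C by simp
  then show ?thesis using l by (intro exI[of _ l]) auto
qed

end



context subord begin

lemma pos_of: "1 / real (Suc n) < r \<Longrightarrow> 0 < r"
  by (metis less_trans of_nat_0_less_iff zero_less_Suc zero_less_divide_1_iff)

definition Rn :: "nat \<Rightarrow> real measure" where
  "Rn n = density lborel (\<lambda>r. ennreal (indicator {1 / real (Suc n)<..} r * (Pi_bar LM r / (c * r))))"

lemma Rn_sets: "sets (Rn n) = sets borel" by (simp add: Rn_def)

lemma Rn_finite: "finite_measure (Rn n)"
proof
  define dl where "dl = 1 / real (Suc n)"
  have dl: "0 < dl" by (simp add: dl_def)
  define K where "K = 1 / (1 - exp (- dl))"
  have K: "0 < K" using dl by (simp add: K_def)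
  have sp: "space (Rn n) = UNIV" by (simp add: Rn_def)
  have "emeasure (Rn n) UNIV = (\<integral>\<^sup>+ r. ennreal (indicator {dl<..} r * (Pi_bar LM r / (c * r))) * indicator UNIV r \<partial>lborel)"
    unfolding Rn_def dl_def by (rule emeasure_density) auto
  then have "emeasure (Rn n) (space (Rn n)) = (\<integral>\<^sup>+ r. ennreal (indicator {dl<..} r * (Pi_bar LM r / (c * r))) \<partial>lborel)"
    by (simp only: sp indicator_UNIV mult_1_right)
  also have "\<dots> \<le> (\<integral>\<^sup>+ r. ennreal K * ennreal (fl 1 r) \<partial>lborel)"
  proof (rule nn_integral_mono)
    fix r :: real
    show "ennreal (indicator {dl<..} r * (Pi_bar LM r / (c * r))) \<le> ennreal K * ennreal (fl 1 r)"
    proof (cases "dl < r")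
      case True
      then have r: "0 < r" using dl by simp
      have X: "0 \<le> Pi_bar LM r / (c * r)" using r c_pos Pb_nonneg by simp
      have e: "exp (- r) \<le> exp (- dl)" using True by simp
      have "1 - exp (- dl) \<le> 1 - exp (- r)" using e by simp
      then have "1 \<le> K * (1 - exp (- r))" using dl by (simp add: K_def field_simps)
      then have "1 * (Pi_bar LM r / (c * r)) \<le> K * (1 - exp (- r)) * (Pi_bar LM r / (c * r))"
        using X by (rule mult_right_mono)
      then have "Pi_bar LM r / (c * r) \<le> K * (1 - exp (- r)) * (Pi_bar LM r / (c * r))" by simp
      then have "indicator {dl<..} r * (Pi_bar LM r / (c * r)) \<le> K * fl 1 r"
        using True r by (simp add: fl_def mult.assoc)
      moreover have "ennreal K * ennreal (fl 1 r) = ennreal (K * fl 1 r)"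
        using K fl_nonneg[of 1 r] by (simp add: ennreal_mult)
      ultimately show ?thesis by (simp add: ennreal_leI)
    qed simp
  qed
  also have "\<dots> = ennreal K * (\<integral>\<^sup>+ r. ennreal (fl 1 r) \<partial>lborel)"
    by (rule nn_integral_cmult) simp
  also have "(\<integral>\<^sup>+ r. ennreal (fl 1 r) \<partial>lborel) = ennreal (1/c) * G 1"
    unfolding fl_def by (rule Phi_nn) simp
  also have "ennreal K * (ennreal (1/c) * G 1) < \<infinity>"
    using G_fin[of 1] by (simp add: ennreal_mult_less_top)
  finally show "emeasure (Rn n) (space (Rn n)) \<noteq> \<infinity>" by simp
qed

lemma Rn_neg: "emeasure (Rn n) {..<0} = 0"
proof -
  have "emeasure (Rn n) {..<0} = (\<integral>\<^sup>+ r. ennreal (indicator {1 / real (Suc n)<..} r * (Pi_bar LM r / (c * r))) * indicator {..<0} r \<partial>lborel)"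
    unfolding Rn_def by (rule emeasure_density) auto
  also have "\<dots> = (\<integral>\<^sup>+ r. 0 \<partial>(lborel :: real measure))"
  proof (rule nn_integral_cong)
    fix r :: real
    have "0 < 1 / real (Suc n)" by simp
    then show "ennreal (indicator {1 / real (Suc n)<..} r * (Pi_bar LM r / (c * r))) * indicator {..<0} r = 0"
      using pos_of[of n r] by (auto split: split_indicator)
  qed
  finally show ?thesis by simp
qed

definition Phn :: "nat \<Rightarrow> real \<Rightarrow> real" where
  "Phn n l = (\<integral>x. 1 - exp (- (l * x)) \<partial>Rn n)"

lemma Phn_eq: "Phn n l = (\<integral>r. indicator {1 / real (Suc n)<..} r * fl l r \<partial>lborel)"
proof -
  have "Phn n l = (\<integral>r. (indicator {1 / real (Suc n)<..} r * (Pi_bar LM r / (c * r))) *\<^sub>R (1 - exp (- (l * r))) \<partial>lborel)"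
    unfolding Phn_def Rn_def
  proof (rule integral_density)
    show "AE x in lborel. 0 \<le> indicator {1 / real (Suc n)<..} x * (Pi_bar LM x / (c * x))"
    proof (rule AE_I2)
      fix x :: real
      have "0 < 1 / real (Suc n)" by simp
      then show "0 \<le> indicator {1 / real (Suc n)<..} x * (Pi_bar LM x / (c * x))"
        using c_pos Pb_nonneg[of x] pos_of[of n x] by (auto split: split_indicator intro!: divide_nonneg_pos)
    qed
  qed simp_all
  also have "\<dots> = (\<integral>r. indicator {1 / real (Suc n)<..} r * fl l r \<partial>lborel)"
  proof (rule Bochner_Integration.integral_cong[OF refl])
    fix r :: real
    have "0 < 1 / real (Suc n)" by simp
    then show "(indicator {1 / real (Suc n)<..} r * (Pi_bar LM r / (c * r))) *\<^sub>R (1 - exp (- (l * r)))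
        = indicator {1 / real (Suc n)<..} r * fl l r"
      using pos_of[of n r] by (auto simp: fl_def split: split_indicator)
  qed
  finally show ?thesis .
qed

lemma Phn_conv_int:
  assumes l: "0 \<le> l"
  shows "(\<lambda>n. Phn n l) \<longlonglongrightarrow> Phi l" and "integrable lborel (\<lambda>r. indicator {1 / real (Suc n)<..} r * fl l r)"
proof -
  have bnd: "AE x in lborel. norm (indicator {1 / real (Suc n)<..} x * fl l x) \<le> fl l x" for n
    using fl_nonneg[OF l] by (auto split: split_indicator)
  have lim: "AE x in lborel. (\<lambda>n. indicator {1 / real (Suc n)<..} x * fl l x) \<longlonglongrightarrow> fl l x"
  proof (rule AE_I2)
    fix x :: real
    show "(\<lambda>n. indicator {1 / real (Suc n)<..} x * fl l x) \<longlonglongrightarrow> fl l x"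
    proof (cases "0 < x")
      case True
      then obtain N where N: "inverse (real (Suc N)) < x" using reals_Archimedean by blast
      have "eventually (\<lambda>n. indicator {1 / real (Suc n)<..} x * fl l x = fl l x) sequentially"
        unfolding eventually_sequentially
      proof (intro exI allI impI)
        fix n assume "N \<le> n"
        then have "1 / real (Suc n) \<le> inverse (real (Suc N))"
          by (simp add: divide_inverse le_imp_inverse_le)
        then show "indicator {1 / real (Suc n)<..} x * fl l x = fl l x" using N by simp
      qed
      then show ?thesis by (rule tendsto_eventually)
    next
      case False
      then have "fl l x = 0" by (simp add: fl_def)
      then show ?thesis by simp
    qed
  qed
  have "(\<lambda>n. \<integral>r. indicator {1 / real (Suc n)<..} r * fl l r \<partial>lborel) \<longlonglongrightarrow> (\<integral>r. fl l r \<partial>lborel)"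
    by (rule integral_dominated_convergence[OF _ _ fl_int[OF l] lim bnd]) simp_all
  then show "(\<lambda>n. Phn n l) \<longlonglongrightarrow> Phi l" by (simp add: Phn_eq Phi_fl)
  show "integrable lborel (\<lambda>r. indicator {1 / real (Suc n)<..} r * fl l r)"
    by (rule integrable_dominated_convergence2[OF _ _ fl_int[OF l] lim bnd]) simp_all
qed

lemma Phn_le:
  assumes l: "0 \<le> l"
  shows "Phn n l \<le> Phi l"
  unfolding Phn_eq Phi_fl
  by (rule integral_mono[OF Phn_conv_int(2)[OF l] fl_int[OF l]])
    (use fl_nonneg[OF l] in \<open>auto split: split_indicator\<close>)

lemma exp_m:
  assumes l: "0 \<le> l"
  shows "exp (m_fun c (sub_psi d LM) l) = exp (- (d / c * l) - Phi l)"
  using part1[OF l] unfolding Phi_def by (simp add: algebra_simps)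

lemma existence_loc:
  "\<exists>nu. prob_space nu \<and> sets nu = sets borel \<and> emeasure nu {..0} = 0
     \<and> (\<forall>lam\<ge>0. (\<integral>r. exp (- lam * r) \<partial>nu) = exp (m_fun c (sub_psi d LM) lam))"
proof -
  have "\<forall>n. \<exists>Q. prob_space Q \<and> sets Q = sets borel \<and> emeasure Q {..<0} = 0
     \<and> (\<forall>l\<ge>0. (\<integral>\<^sup>+x. ennreal (exp (- (l * x))) \<partial>Q) = ennreal (exp (- Phn n l)))"
    using compound_poisson[OF Rn_finite Rn_sets Rn_neg] by (simp add: Phn_def)
  then obtain Q where Q: "\<And>n. prob_space (Q n)" "\<And>n. sets (Q n) = sets borel" "\<And>n. emeasure (Q n) {..<0} = 0"
    "\<And>n l. 0 \<le> l \<Longrightarrow> (\<integral>\<^sup>+x. ennreal (exp (- (l * x))) \<partial>Q n) = ennreal (exp (- Phn n l))"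
    by metis
  have QL: "(\<integral>x. exp (- (l * x)) \<partial>Q n) = exp (- Phn n l)" if "0 \<le> l" for n l
    by (rule lap_real[OF Q(1-3) that Q(4)[OF that]])
  obtain M where M: "prob_space M" "sets M = sets borel" "emeasure M {..<0} = 0"
    "\<And>l. 0 \<le> l \<Longrightarrow> (\<integral>x. exp (- (l * x)) \<partial>M) = exp (- Phi l)"
    using exist_limit[OF Q(1-3) QL Phn_conv_int(1) Phn_le Phi_small] by blast
  have a: "0 \<le> d / c" using d_nonneg c_pos by simp
  obtain N where N: "prob_space N" "sets N = sets borel" "emeasure N {..<0} = 0"
    "\<And>l. 0 \<le> l \<Longrightarrow> (\<integral>x. exp (- (l * x)) \<partial>N) = exp (- (d / c * l) - Phi l)"
    using shift_exist[OF M a] by blast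
  have Na: "emeasure N {..d/c} = 0"
    by (rule atom_free[OF N Phi_unbounded])
  have "emeasure N {..0} \<le> emeasure N {..d/c}"
    by (rule emeasure_mono) (use a N(2) in auto)
  then have N0: "emeasure N {..0} = 0" using Na by simp
  show ?thesis
  proof (intro exI[of _ N] conjI allI impI)
    fix lam :: real assume "0 \<le> lam"
    then show "(\<integral>r. exp (- lam * r) \<partial>N) = exp (m_fun c (sub_psi d LM) lam)"
      using N(4)[of lam] exp_m[of lam] by simp
  qed (use N N0 in auto)
qed

lemma props_imp:
  assumes P: "prob_space nu" "sets nu = sets borel" "emeasure nu {..0} = 0"
    and L: "\<forall>lam\<ge>0. (\<integral>r. exp (- lam * r) \<partial>nu) = exp (m_fun c (sub_psi d LM) lam)"
  shows "emeasure nu {..<0} = 0"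
    and "\<And>l. 0 \<le> l \<Longrightarrow> (\<integral>x. exp (- (l * x)) \<partial>nu) = exp (- (d / c * l) - Phi l)"
proof -
  have "emeasure nu {..<0} \<le> emeasure nu {..0}" by (rule emeasure_mono) (use P in auto)
  then show "emeasure nu {..<0} = 0" using P(3) by simp
  show "(\<integral>x. exp (- (l * x)) \<partial>nu) = exp (- (d / c * l) - Phi l)" if "0 \<le> l" for l
    using L that exp_m[OF that] by simp
qed

lemma tail_loc:
  assumes P: "prob_space nu" "sets nu = sets borel" "emeasure nu {..0} = 0"
    and L: "\<forall>lam\<ge>0. (\<integral>r. exp (- lam * r) \<partial>nu) = exp (m_fun c (sub_psi d LM) lam)"
  shows "emeasure nu {d / c<..} = 1"
proof -
  interpret prob_space nu by (rule P(1))
  have Na: "emeasure nu {..d/c} = 0"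
    by (rule atom_free[OF P(1,2) props_imp[OF P L] Phi_unbounded])
  have sp: "space nu = UNIV" using sets_eq_imp_space_eq[OF P(2)] by simp
  have "prob (space nu - {..d/c}) = 1 - prob {..d/c}" by (rule prob_compl) (use P(2) in simp)
  moreover have "space nu - {..d/c} = {d/c<..}" using sp by auto
  moreover have "prob {..d/c} = 0" using Na by (simp add: emeasure_eq_measure)
  ultimately have "prob {d/c<..} = 1" by simp
  then show ?thesis by (simp add: emeasure_eq_measure)
qed

end



lemma m_scale:
  assumes k: "0 < k"
  shows "m_fun (k * c) psi l = m_fun c psi l / k"
proof -
  have "m_fun (k * c) psi l = (\<integral>s. (indicator {0..l} s * (psi s / (c * s))) / k \<partial>lborel)"
    unfolding m_fun_def set_lebesgue_integral_def
    by (rule Bochner_Integration.integral_cong[OF refl]) (simp add: mult.assoc mult.commute mult.left_commute)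
  also have "\<dots> = m_fun c psi l / k"
    unfolding m_fun_def set_lebesgue_integral_def by (simp add: integral_divide_zero[symmetric] del: integral_divide_zero)
  finally show ?thesis .
qed

context subord begin

lemma infdiv_loc:
  assumes P: "prob_space nu" "sets nu = sets borel" "emeasure nu {..0} = 0"
    and L: "\<forall>lam\<ge>0. (\<integral>r. exp (- lam * r) \<partial>nu) = exp (m_fun c (sub_psi d LM) lam)"
  shows "inf_divisible nu"
  unfolding inf_divisible_def
proof (intro allI impI)
  fix n :: nat assume n: "1 \<le> n"
  then have npos: "0 < real n" by simp
  interpret S: subord "real n * c" d LM
    by unfold_locales (use c_pos d_nonneg Pi_sets Pi_support Pi_subord cond_L Pi_nonzero npos in auto)
  obtain mu where mu: "prob_space mu" "sets mu = sets borel" "emeasure mu {..0} = 0"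
    "\<And>lam. 0 \<le> lam \<Longrightarrow> (\<integral>r. exp (- lam * r) \<partial>mu) = exp (m_fun (real n * c) (sub_psi d LM) lam)"
    using S.existence_loc by blast
  have mun: "emeasure mu {..<0} = 0"
  proof -
    have "emeasure mu {..<0} \<le> emeasure mu {..0}" by (rule emeasure_mono) (use mu in auto)
    then show ?thesis using mu(3) by simp
  qed
  have nun: "emeasure nu {..<0} = 0"
  proof -
    have "emeasure nu {..<0} \<le> emeasure nu {..0}" by (rule emeasure_mono) (use P in auto)
    then show ?thesis using P(3) by simp
  qed
  note CP = conv_power_props[OF mu(1,2) mun]
  have cpL: "(\<integral>x. exp (- (l * x)) \<partial>conv_power mu n) = exp (m_fun c (sub_psi d LM) l)" if l: "0 \<le> l" for l
  proof -
    have "(\<integral>\<^sup>+x. ennreal (exp (- (l * x))) \<partial>mu) = ennreal (\<integral>x. exp (- (l * x)) \<partial>mu)"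
      by (rule nn_integral_eq_integral[OF lap_integrable'[OF mu(1,2) mun l]]) simp
    also have "(\<integral>x. exp (- (l * x)) \<partial>mu) = exp (m_fun c (sub_psi d LM) l / real n)"
      using mu(4)[OF l] m_scale[OF npos] by simp
    finally have a: "(\<integral>\<^sup>+x. ennreal (exp (- (l * x))) \<partial>mu) = ennreal (exp (m_fun c (sub_psi d LM) l / real n))" .
    have "(\<integral>\<^sup>+x. ennreal (exp (- (l * x))) \<partial>conv_power mu n) = ennreal (exp (m_fun c (sub_psi d LM) l / real n)) ^ n"
      using CP[of n l] a by simp
    also have "\<dots> = ennreal (exp (m_fun c (sub_psi d LM) l / real n) ^ n)" by (simp add: ennreal_power)
    also have "exp (m_fun c (sub_psi d LM) l / real n) ^ n = exp (m_fun c (sub_psi d LM) l)"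
      using npos by (simp add: exp_of_nat_mult[symmetric])
    finally show ?thesis using CP[of n l] by (intro lap_real[OF _ _ _ l]) auto
  qed
  have "conv_power mu n = nu"
  proof (rule lap_unique)
    show "prob_space (conv_power mu n)" "sets (conv_power mu n) = sets borel" "emeasure (conv_power mu n) {..<0} = 0"
      using CP[of n 0] by auto
    show "prob_space nu" "sets nu = sets borel" "emeasure nu {..<0} = 0" using P nun by auto
    fix k :: nat
    show "(\<integral>x. exp (- real k * x) \<partial>conv_power mu n) = (\<integral>x. exp (- real k * x) \<partial>nu)"
      using cpL[of "real k"] L by simp
  qed
  then show "\<exists>mu. prob_space mu \<and> sets mu = sets borel \<and> conv_power mu n = nu"
    using mu(1,2) by blast
qed

end

theorem lemma3p3:
  fixes c d :: real and LM :: "real measure"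
  assumes c_pos: "c > 0"
    and d_nonneg: "d \<ge> 0"
    and Pi_sets: "sets LM = sets borel"
    and Pi_support: "emeasure LM {..0} = 0"
    and Pi_subord: "(\<integral>\<^sup>+ r. ennreal (min 1 r) \<partial>LM) < \<infinity>"
    and cond_L: "(\<integral>\<^sup>+ r. ennreal (ln r) * indicator {1..} r \<partial>LM) < \<infinity>"
    and Pi_nonzero: "emeasure LM {0<..} \<noteq> 0"
  shows "(\<forall>lam\<ge>0. - m_fun c (sub_psi d LM) lam
            = d / c * lam + (LBINT r:{0<..}. (1 - exp (- lam * r)) * Pi_bar LM r / (c * r)))
       \<and> (\<exists>!nu. prob_space nu \<and> sets nu = sets borel \<and> emeasure nu {..0} = 0
              \<and> (\<forall>lam\<ge>0. (\<integral> r. exp (- lam * r) \<partial>nu) = exp (m_fun c (sub_psi d LM) lam)))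
       \<and> (\<forall>nu. prob_space nu \<and> sets nu = sets borel \<and> emeasure nu {..0} = 0
              \<and> (\<forall>lam\<ge>0. (\<integral> r. exp (- lam * r) \<partial>nu) = exp (m_fun c (sub_psi d LM) lam))
              \<longrightarrow> inf_divisible nu \<and> emeasure nu {d / c<..} = 1)"
proof -
  interpret subord c d LM
    by unfold_locales (use assms in auto)
  have uniq: "nu1 = nu2"
    if 1: "prob_space nu1" "sets nu1 = sets borel" "emeasure nu1 {..0} = 0"
      "\<forall>lam\<ge>0. (\<integral> r. exp (- lam * r) \<partial>nu1) = exp (m_fun c (sub_psi d LM) lam)"
    and 2: "prob_space nu2" "sets nu2 = sets borel" "emeasure nu2 {..0} = 0"
      "\<forall>lam\<ge>0. (\<integral> r. exp (- lam * r) \<partial>nu2) = exp (m_fun c (sub_psi d LM) lam)"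
    for nu1 nu2
  proof (rule lap_unique)
    show "prob_space nu1" "sets nu1 = sets borel" "emeasure nu1 {..<0} = 0"
      using 1 props_imp(1)[OF 1] by auto
    show "prob_space nu2" "sets nu2 = sets borel" "emeasure nu2 {..<0} = 0"
      using 2 props_imp(1)[OF 2] by auto
    fix k :: nat
    show "(\<integral>x. exp (- real k * x) \<partial>nu1) = (\<integral>x. exp (- real k * x) \<partial>nu2)"
      using 1(4) 2(4) by simp
  qed
  show ?thesis
  proof (intro conjI allI impI)
    fix lam :: real assume "0 \<le> lam"
    then show "- m_fun c (sub_psi d LM) lam
            = d / c * lam + (LBINT r:{0<..}. (1 - exp (- lam * r)) * Pi_bar LM r / (c * r))"
      by (rule part1)
  next
    show "\<exists>!nu. prob_space nu \<and> sets nu = sets borel \<and> emeasure nu {..0} = 0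
              \<and> (\<forall>lam\<ge>0. (\<integral> r. exp (- lam * r) \<partial>nu) = exp (m_fun c (sub_psi d LM) lam))"
      using existence_loc uniq by blast
  next
    fix nu assume H: "prob_space nu \<and> sets nu = sets borel \<and> emeasure nu {..0} = 0
              \<and> (\<forall>lam\<ge>0. (\<integral> r. exp (- lam * r) \<partial>nu) = exp (m_fun c (sub_psi d LM) lam))"
    then show "inf_divisible nu" using infdiv_loc by blast
    show "emeasure nu {d / c<..} = 1" using H tail_loc by blast
  qed
qed



end
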